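(* Let $X$ be a Hausdorff locally compact space and $\sigma\colon\mathrm{Dom}(\sigma)\to\mathrm{Ran}(\sigma)$ a local homeomorphism between open subsets of $X$, with Deaconu–Renault groupoid $\mathcal{G}_\sigma$. For $Y\subset X\times\mathbb{T}$ put $Y_x=\{z\in\mathbb{T}:(x,z)\in Y\}$. Then $Y$ equals $q^{-1}(C)$ for some $\mathcal{G}_\sigma$-invariant closed subset $C\subset\mathrm{Stab}(\mathcal{G}_\sigma)^\wedge$ if and only if: (i) $Y$ is closed in $X\times\mathbb{T}$ (product topology); (ii) $Y_x=Y_{\sigma(x)}$ for all $x\in\mathrm{Dom}(\sigma)$; (iii) if $Y_{x_0}\ne\emptyset,\mathbb{T}$, then $x_0$ is periodic, $e^{2\pi i/p(x_0)}Y_{x_0}=Y_{x_0}$, and there is a neighbourhood $V$ of $x_0$ such that $Y_x=\emptyset$ for all $x\in V$ with $l(x)\ne l(x_0)$.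
   Context: Set $\sigma^0=\mathrm{id}_X$, and for $n\ge1$ let $\sigma^n$ be the $n$-fold composition with its natural domain $\mathrm{Dom}(\sigma^n)$. $\mathcal{G}_\sigma=\{(x,m-n,y): m,n\ge0,\ x\in\mathrm{Dom}(\sigma^m),\ y\in\mathrm{Dom}(\sigma^n),\ \sigma^m(x)=\sigma^n(y)\}$ with $r(x,p,y)=x$, $s(x,p,y)=y$, $(x,p,y)(y,q,w)=(x,p+q,w)$, unit space identified with $X$, and topology with basis $Z(U,m,n,V)=\{(x,m-n,y): x\in U\cap\mathrm{Dom}(\sigma^m),\ y\in V\cap\mathrm{Dom}(\sigma^n),\ \sigma^m(x)=\sigma^n(y)\}$ ($U,V$ open); it is a Hausdorff locally compact étale groupoid with abelian isotropy $(\mathcal{G}_\sigma)^x_x=\{(x,l,x)\}$ and grading $\Phi(x,l,y)=l$. $\mathrm{Stab}(\mathcal{G}_\sigma)^\wedge$ is the set of pairs $(x,\chi)$, $\chi$ a character of $(\mathcal{G}_\sigma)^x_x$, with topology having as basis finite intersections of $\mathcal{O}(U,K,V)=\{(x,\chi): x\in U,\ \chi(K\cap(\mathcal{G}_\sigma)^x_x)\subset V\}$ ($U\subset X$ open, $K$ compact in the isotropy bundle, $V\subset\mathbb{T}$ open); $\mathcal{G}_\sigma$ acts by $g(x,\chi)=(r(g),\chi(g^{-1}\cdot g))$ for $s(g)=x$. The map $q\colon X\times\mathbb{T}\to\mathrm{Stab}(\mathcal{G}_\sigma)^\wedge$ is $q(x,z)=(x,\ (x,l,x)\mapsto z^l)$.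 A point $x$ is periodic if $\sigma^{n+p}(x)=\sigma^n(x)$ for some $p\ge1$, $n\ge0$; then $p(x)$ is the smallest such $p$ and $l(x)$ is the smallest $l\ge0$ with $\sigma^{p(x)+l}(x)=\sigma^l(x)$; for non-periodic $x$, $p(x)=l(x)=\infty$. *)

theory Defs
  imports "HOL-Analysis.Analysis" "HOL-Library.Extended_Nat"
begin

text \<open>Deaconu--Renault groupoid of a local homeomorphism \<open>\<sigma>\<close> with domain \<open>D\<close>
  on the space \<open>X = UNIV :: 'a\<close>.\<close>

definition local_homeo :: "'a::topological_space set \<Rightarrow> ('a \<Rightarrow> 'a) \<Rightarrow> bool" where
  "local_homeo D \<sigma> \<longleftrightarrow> (\<forall>x\<in>D. \<exists>U. open U \<and> x \<in> U \<and> U \<subseteq> D \<and> open (\<sigma> ` U) \<and>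
      (\<exists>g. homeomorphism U (\<sigma> ` U) \<sigma> g))"

definition dom_iter :: "'a set \<Rightarrow> ('a \<Rightarrow> 'a) \<Rightarrow> nat \<Rightarrow> 'a set" where
  "dom_iter D \<sigma> n = {x. \<forall>i<n. (\<sigma> ^^ i) x \<in> D}"

type_synonym 'a gel = "'a \<times> int \<times> 'a"

definition DRG :: "'a set \<Rightarrow> ('a \<Rightarrow> 'a) \<Rightarrow> 'a gel set" where
  "DRG D \<sigma> = {(x, int m - int n, y) | x m n y. x \<in> dom_iter D \<sigma> m \<and> y \<in> dom_iter D \<sigma> n
      \<and> (\<sigma> ^^ m) x = (\<sigma> ^^ n) y}"

definition gr :: "'a gel \<Rightarrow> 'a" where "gr g = fst g"
definition gs :: "'a gel \<Rightarrow> 'a" where "gs g = snd (snd g)"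
definition gmul :: "'a gel \<Rightarrow> 'a gel \<Rightarrow> 'a gel" where
  "gmul g h = (fst g, fst (snd g) + fst (snd h), snd (snd h))"
definition ginv :: "'a gel \<Rightarrow> 'a gel" where
  "ginv g = (snd (snd g), - fst (snd g), fst g)"

definition Zset :: "'a set \<Rightarrow> ('a \<Rightarrow> 'a) \<Rightarrow> 'a set \<Rightarrow> nat \<Rightarrow> nat \<Rightarrow> 'a set \<Rightarrow> 'a gel set" where
  "Zset D \<sigma> U m n V = {(x, int m - int n, y) | x y. x \<in> U \<inter> dom_iter D \<sigma> m \<and>
      y \<in> V \<inter> dom_iter D \<sigma> n \<and> (\<sigma> ^^ m) x = (\<sigma> ^^ n) y}"

definition DRG_top :: "'a::topological_space set \<Rightarrow> ('a \<Rightarrow> 'a) \<Rightarrow> 'a gel topology" where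
  "DRG_top D \<sigma> = topology_generated_by {Zset D \<sigma> U m n V | U m n V. open U \<and> open V}"

definition iso_at :: "'a set \<Rightarrow> ('a \<Rightarrow> 'a) \<Rightarrow> 'a \<Rightarrow> 'a gel set" where
  "iso_at D \<sigma> x = {g \<in> DRG D \<sigma>. gr g = x \<and> gs g = x}"

definition iso_bundle :: "'a set \<Rightarrow> ('a \<Rightarrow> 'a) \<Rightarrow> 'a gel set" where
  "iso_bundle D \<sigma> = {g \<in> DRG D \<sigma>. gr g = gs g}"

abbreviation circle :: "complex set" where "circle \<equiv> sphere 0 1"

text \<open>A character of the isotropy group at \<open>x\<close>, represented as a function on groupoid
  elements that vanishes outside the isotropy group (so that it is determined uniquely).\<close>
definition is_char :: "'a set \<Rightarrow> ('a \<Rightarrow> 'a) \<Rightarrow> 'a \<Rightarrow> ('a gel \<Rightarrow> complex) \<Rightarrow> bool" where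
  "is_char D \<sigma> x ch \<longleftrightarrow> (\<forall>h\<in>iso_at D \<sigma> x. ch h \<in> circle) \<and>
     (\<forall>h1\<in>iso_at D \<sigma> x. \<forall>h2\<in>iso_at D \<sigma> x. ch (gmul h1 h2) = ch h1 * ch h2) \<and>
     (\<forall>h. h \<notin> iso_at D \<sigma> x \<longrightarrow> ch h = 0)"

definition Stab_dual :: "'a set \<Rightarrow> ('a \<Rightarrow> 'a) \<Rightarrow> ('a \<times> ('a gel \<Rightarrow> complex)) set" where
  "Stab_dual D \<sigma> = {(x, ch). is_char D \<sigma> x ch}"

definition Oset :: "'a set \<Rightarrow> ('a \<Rightarrow> 'a) \<Rightarrow> 'a set \<Rightarrow> 'a gel set \<Rightarrow> complex set
     \<Rightarrow> ('a \<times> ('a gel \<Rightarrow> complex)) set" where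
  "Oset D \<sigma> U K V = {(x, ch) \<in> Stab_dual D \<sigma>. x \<in> U \<and> ch ` (K \<inter> iso_at D \<sigma> x) \<subseteq> V}"

definition Stab_top :: "'a::topological_space set \<Rightarrow> ('a \<Rightarrow> 'a)
     \<Rightarrow> ('a \<times> ('a gel \<Rightarrow> complex)) topology" where
  "Stab_top D \<sigma> = topology_generated_by
     {Oset D \<sigma> U K V | U K V. open U \<and> compactin (subtopology (DRG_top D \<sigma>) (iso_bundle D \<sigma>)) K
        \<and> openin (top_of_set circle) V}"

definition act :: "'a set \<Rightarrow> ('a \<Rightarrow> 'a) \<Rightarrow> 'a gel \<Rightarrow> ('a \<times> ('a gel \<Rightarrow> complex))
     \<Rightarrow> ('a \<times> ('a gel \<Rightarrow> complex))" where
  "act D \<sigma> g p = (gr g, \<lambda>h. if h \<in> iso_at D \<sigma> (gr g) then snd p (gmul (gmul (ginv g) h) g) else 0)"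

definition invariant :: "'a set \<Rightarrow> ('a \<Rightarrow> 'a) \<Rightarrow> ('a \<times> ('a gel \<Rightarrow> complex)) set \<Rightarrow> bool" where
  "invariant D \<sigma> C \<longleftrightarrow> (\<forall>g\<in>DRG D \<sigma>. \<forall>ch. (gs g, ch) \<in> C \<longrightarrow> act D \<sigma> g (gs g, ch) \<in> C)"

definition qmap :: "'a set \<Rightarrow> ('a \<Rightarrow> 'a) \<Rightarrow> 'a \<Rightarrow> complex \<Rightarrow> ('a \<times> ('a gel \<Rightarrow> complex))" where
  "qmap D \<sigma> x z = (x, \<lambda>h. if h \<in> iso_at D \<sigma> x then z powi (fst (snd h)) else 0)"

definition fiber :: "('a \<times> complex) set \<Rightarrow> 'a \<Rightarrow> complex set" where
  "fiber Y x = {z \<in> circle. (x, z) \<in> Y}"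

definition periodic_pt :: "'a set \<Rightarrow> ('a \<Rightarrow> 'a) \<Rightarrow> 'a \<Rightarrow> bool" where
  "periodic_pt D \<sigma> x \<longleftrightarrow> (\<exists>p n. p \<ge> 1 \<and> x \<in> dom_iter D \<sigma> (n + p) \<and> (\<sigma> ^^ (n + p)) x = (\<sigma> ^^ n) x)"

definition per_p :: "'a set \<Rightarrow> ('a \<Rightarrow> 'a) \<Rightarrow> 'a \<Rightarrow> enat" where
  "per_p D \<sigma> x = (if periodic_pt D \<sigma> x then
     enat (LEAST p. p \<ge> 1 \<and> (\<exists>n. x \<in> dom_iter D \<sigma> (n + p) \<and> (\<sigma> ^^ (n + p)) x = (\<sigma> ^^ n) x))
     else \<infinity>)"

definition per_l :: "'a set \<Rightarrow> ('a \<Rightarrow> 'a) \<Rightarrow> 'a \<Rightarrow> enat" where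
  "per_l D \<sigma> x = (if periodic_pt D \<sigma> x then
     enat (LEAST l. x \<in> dom_iter D \<sigma> (the_enat (per_p D \<sigma> x) + l) \<and>
                    (\<sigma> ^^ (the_enat (per_p D \<sigma> x) + l)) x = (\<sigma> ^^ l) x)
     else \<infinity>)"

end

theory Submission
  imports Defs
begin


locale DR =
  fixes D :: "'a::t2_space set" and \<sigma> :: "'a \<Rightarrow> 'a"
  assumes openD: "open D" and lh: "local_homeo D \<sigma>"
begin

abbreviation d where "d n \<equiv> dom_iter D \<sigma> n"
abbreviation s where "s n \<equiv> \<sigma> ^^ n"

lemma s_comp: "s a (s b x) = s (a + b) x"
  by (simp add: funpow_add)

lemma d0[simp]: "d 0 = UNIV" by (simp add: dom_iter_def)

lemma d_add: "x \<in> d (a + b) \<longleftrightarrow> x \<in> d a \<and> s a x \<in> d b"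
proof -
  have "(\<forall>i<a+b. s i x \<in> D) \<longleftrightarrow> (\<forall>i<a. s i x \<in> D) \<and> (\<forall>i<b. s i (s a x) \<in> D)"
  proof safe
    fix i assume "\<forall>i<a+b. s i x \<in> D" "i < b"
    then have "s (i + a) x \<in> D" by simp
    then show "s i (s a x) \<in> D" by (simp add: s_comp)
  next
    fix i assume A: "\<forall>i<a. s i x \<in> D" "\<forall>i<b. s i (s a x) \<in> D" "i < a + b"
    show "s i x \<in> D"
    proof (cases "i < a")
      case False
      then have e: "s i x = s (i - a) (s a x)" by (simp add: s_comp)
      have "i - a < b" using A(3) False by simp
      then show ?thesis using A(2) e by simp
    qed (use A in auto)
  qed auto
  then show ?thesis by (simp add: dom_iter_def)
qed

lemma d_Suc: "x \<in> d (Suc n) \<longleftrightarrow> x \<in> d n \<and> s n x \<in> D"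
proof -
  have 1: "y \<in> d 1 \<longleftrightarrow> y \<in> D" for y by (simp add: dom_iter_def)
  show ?thesis using d_add[of x n 1] 1[of "s n x"] by simp
qed

lemma d_mono: "a \<le> b \<Longrightarrow> x \<in> d b \<Longrightarrow> x \<in> d a"
  by (auto simp: dom_iter_def)

lemma lh_at: assumes "y \<in> D"
  obtains U g where "open U" "y \<in> U" "U \<subseteq> D" "homeomorphism U (\<sigma> ` U) \<sigma> g"
proof -
  from lh have "\<forall>x\<in>D. \<exists>U. open U \<and> x \<in> U \<and> U \<subseteq> D \<and> open (\<sigma> ` U) \<and>
      (\<exists>g. homeomorphism U (\<sigma> ` U) \<sigma> g)" unfolding local_homeo_def .
  then have "\<exists>U. open U \<and> y \<in> U \<and> U \<subseteq> D \<and> open (\<sigma> ` U) \<and>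
      (\<exists>g. homeomorphism U (\<sigma> ` U) \<sigma> g)" using assms by (rule bspec)
  then show ?thesis using that by blast
qed

lemma cont: "continuous_on D \<sigma>"
proof -
  have "isCont \<sigma> x" if xD: "x \<in> D" for x
  proof -
    obtain U g where U: "open U" "x \<in> U" "U \<subseteq> D" "homeomorphism U (\<sigma> ` U) \<sigma> g"
      using lh_at[OF xD] by blast
    then have "continuous_on U \<sigma>" unfolding homeomorphism_def by blast
    then have "\<forall>x\<in>U. isCont \<sigma> x" using continuous_on_eq_continuous_at[OF U(1)] by blast
    then show ?thesis using U by blast
  qed
  then show ?thesis using continuous_on_eq_continuous_at[OF openD] by blast
qed

lemma loc_inj: "y \<in> D \<Longrightarrow> \<exists>U. open U \<and> y \<in> U \<and> U \<subseteq> D \<and> inj_on \<sigma> U"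
proof -
  assume "y \<in> D"
  then obtain U g where U: "open U" "y \<in> U" "U \<subseteq> D" "homeomorphism U (\<sigma> ` U) \<sigma> g"
    using lh unfolding local_homeo_def by blast
  then have "inj_on \<sigma> U" by (intro inj_on_inverseI[of U g]) (auto simp: homeomorphism_def)
  then show ?thesis using U by blast
qed

lemma open_pre: "open U \<Longrightarrow> open {x \<in> d n. s n x \<in> U}"
proof (induction n arbitrary: U)
  case 0
  then show ?case by simp
next
  case (Suc n)
  have "{x \<in> d (Suc n). s (Suc n) x \<in> U} = {x \<in> d n. s n x \<in> D \<inter> \<sigma> -` U}"
    by (auto simp: d_Suc)
  moreover have "open (D \<inter> \<sigma> -` U)"
  proof -
    have "open (\<sigma> -` U \<inter> D)" using iffD1[OF continuous_on_open_vimage[OF openD] cont] Suc.prems by blast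
    then show ?thesis by (simp add: Int_commute)
  qed
  ultimately show ?case using Suc.IH[OF \<open>open (D \<inter> \<sigma> -` U)\<close>] by simp
qed

lemma open_d: "open (d n)"
  using open_pre[of UNIV n] by simp

lemma sep: assumes "x0 \<in> d a" "x0 \<in> d b" "s a x0 \<noteq> s b x0"
  shows "\<exists>U. open U \<and> x0 \<in> U \<and> (\<forall>x\<in>U. x \<in> d a \<and> x \<in> d b \<and> s a x \<noteq> s b x)"
proof -
  obtain A B where AB: "open A" "open B" "s a x0 \<in> A" "s b x0 \<in> B" "A \<inter> B = {}"
    using hausdorff[OF assms(3)] by blast
  let ?U = "{x \<in> d a. s a x \<in> A} \<inter> {x \<in> d b. s b x \<in> B}"
  have "open ?U" using open_pre AB by blast
  then show ?thesis using assms AB by (intro exI[of _ ?U]) auto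
qed

definition pp where "pp y \<longleftrightarrow> (\<exists>q>0. y \<in> d q \<and> s q y = y)"

lemma pp_mod: assumes "s q y = y" "q > 0" shows "s j y = s (j mod q) y"
proof (induction j rule: less_induct)
  case (less j)
  show ?case
  proof (cases "j < q")
    case False
    then have "s j y = s (j - q) (s q y)" by (simp add: s_comp)
    also have "\<dots> = s (j - q) y" using assms by simp
    also have "\<dots> = s ((j - q) mod q) y" using less False assms by simp
    finally show ?thesis using False by (simp add: le_mod_geq)
  qed simp
qed

lemma pp_all: assumes "y \<in> d q" "s q y = y" "q > 0" shows "y \<in> d j" "s i y \<in> D"
proof -
  have all: "s i y \<in> D" for i using pp_mod[OF assms(2,3), of i] assms(1,3) by (simp add: dom_iter_def)
  then show "s i y \<in> D" .
  show "y \<in> d j" using all by (simp add: dom_iter_def)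
qed

lemma pp_d: "pp y \<Longrightarrow> y \<in> d j" using pp_all unfolding pp_def by blast
lemma pp_D: "pp y \<Longrightarrow> s i y \<in> D" using pp_all unfolding pp_def by blast

lemma pp_iter: assumes "pp y" shows "pp (s a y)"
proof -
  obtain q where q: "q > 0" "y \<in> d q" "s q y = y" using assms pp_def by blast
  have "s a y \<in> d q"
  proof -
    have "y \<in> d (a + q)" using pp_d[OF assms] .
    then show ?thesis using d_add by blast
  qed
  moreover have "s q (s a y) = s a (s q y)" by (simp add: s_comp add.commute)
  then have "s q (s a y) = s a y" using q by simp
  ultimately show ?thesis using q pp_def by blast
qed

lemma pp_shift: assumes "pp y" "s k (s a y) = s a y" shows "s k y = y"
proof -
  obtain q where q: "q > 0" "y \<in> d q" "s q y = y" using assms pp_def by blast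
  have y1: "s (q * a) y = y" using pp_mod[OF q(3,1), of "q*a"] by simp
  have ge: "q * a \<ge> a" using q by simp
  have "s k y = s k (s (q * a) y)" using y1 by simp
  also have "\<dots> = s (q*a - a) (s k (s a y))"
    using ge by (simp add: s_comp add.commute add.left_commute)
  also have "\<dots> = s (q*a - a) (s a y)" using assms by simp
  also have "\<dots> = s (q * a) y" using ge by (simp add: s_comp)
  finally show ?thesis using y1 by simp
qed

lemma periodic_iff: "periodic_pt D \<sigma> x \<longleftrightarrow> (\<exists>n. x \<in> d n \<and> pp (s n x))"
proof
  assume "periodic_pt D \<sigma> x"
  then obtain p n where "p \<ge> 1" "x \<in> d (n + p)" "s (n + p) x = s n x"
    unfolding periodic_pt_def by blast
  moreover have "s p (s n x) = s (n + p) x" by (simp add: s_comp add.commute)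
  ultimately show "\<exists>n. x \<in> d n \<and> pp (s n x)" unfolding pp_def
    by (intro exI[of _ n] conjI exI[of _ p]) (auto simp: d_add)
next
  assume "\<exists>n. x \<in> d n \<and> pp (s n x)"
  then obtain n q where "x \<in> d n" "q > 0" "s n x \<in> d q" "s q (s n x) = s n x"
    unfolding pp_def by blast
  then show "periodic_pt D \<sigma> x" unfolding periodic_pt_def
    by (intro exI[of _ q] exI[of _ n]) (auto simp: d_add s_comp add.commute)
qed

definition P where "P x = (LEAST p. p \<ge> 1 \<and> (\<exists>n. x \<in> d (n + p) \<and> s (n + p) x = s n x))"

lemma P_per: "periodic_pt D \<sigma> x \<Longrightarrow> per_p D \<sigma> x = enat (P x)"
  by (simp add: per_p_def P_def)

lemma P_ex: assumes "periodic_pt D \<sigma> x"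
  shows "P x \<ge> 1" "\<exists>n. x \<in> d (n + P x) \<and> s (n + P x) x = s n x"
proof -
  obtain p n where "p \<ge> 1" "x \<in> d (n + p)" "s (n + p) x = s n x"
    using assms unfolding periodic_pt_def by blast
  then have ex: "\<exists>p. p \<ge> 1 \<and> (\<exists>n. x \<in> d (n + p) \<and> s (n + p) x = s n x)" by blast
  have "P x \<ge> 1 \<and> (\<exists>n. x \<in> d (n + P x) \<and> s (n + P x) x = s n x)"
    unfolding P_def by (rule LeastI_ex[OF ex])
  then show "P x \<ge> 1" "\<exists>n. x \<in> d (n + P x) \<and> s (n + P x) x = s n x" by auto
qed

lemma P_pp: assumes "periodic_pt D \<sigma> x" shows "\<exists>n. x \<in> d n \<and> pp (s n x) \<and> s (P x) (s n x) = s n x"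
proof -
  obtain n where n: "x \<in> d (n + P x)" "s (n + P x) x = s n x" using P_ex[OF assms] by blast
  moreover have "s (P x) (s n x) = s (n + P x) x" by (simp add: s_comp add.commute)
  ultimately show ?thesis using P_ex(1)[OF assms] unfolding pp_def
    by (intro exI[of _ n] conjI exI[of _ "P x"]) (auto simp: d_add)
qed

lemma P_min: assumes "1 \<le> r" "x \<in> d (N + r)" "s (N + r) x = s N x" shows "P x \<le> r"
  unfolding P_def by (rule Least_le) (use assms in blast)

lemma P_dvd: assumes "periodic_pt D \<sigma> x" "x \<in> d n" "pp (s n x)" "s k (s n x) = s n x"
  shows "P x dvd k"
proof -
  obtain n0 where n0: "x \<in> d n0" "pp (s n0 x)" "s (P x) (s n0 x) = s n0 x" using P_pp[OF assms(1)] by blast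
  define N where "N = max n n0"
  have p1: "P x \<ge> 1" using P_ex[OF assms(1)] by simp
  have xN: "x \<in> d N"
  proof -
    have "x \<in> d (n + (N - n))" using assms(2,3) pp_d[OF assms(3)] d_add by blast
    then show ?thesis unfolding N_def by simp
  qed
  have z: "s N x = s (N - n0) (s n0 x)" unfolding N_def by (simp add: s_comp)
  have "s (P x) (s N x) = s (N - n0) (s (P x) (s n0 x))" unfolding z by (simp add: s_comp add.commute add.left_commute)
  then have zp: "s (P x) (s N x) = s N x" using n0(3) z by simp
  have z2: "s N x = s (N - n) (s n x)" unfolding N_def by (simp add: s_comp)
  have "s k (s N x) = s (N - n) (s k (s n x))" unfolding z2 by (simp add: s_comp add.commute add.left_commute)
  then have zk: "s k (s N x) = s N x" using assms(4) z2 by simp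
  define r where "r = k mod P x"
  have "s k (s N x) = s r (s N x)" unfolding r_def using pp_mod[OF zp] p1 by simp
  then have zr: "s r (s N x) = s N x" using zk by simp
  show ?thesis
  proof (rule ccontr)
    assume "\<not> P x dvd k"
    then have r1: "r \<ge> 1" "r < P x" unfolding r_def using p1 by (auto simp: dvd_eq_mod_eq_0)
    have ppz: "pp (s N x)" using pp_iter[OF n0(2), of "N - n0"] z by simp
    have "x \<in> d (N + r)" using xN pp_d[OF ppz] d_add by blast
    moreover have "s (N + r) x = s N x" using zr by (simp add: s_comp add.commute)
    ultimately have "P x \<le> r" using P_min r1 by blast
    then show False using r1 by simp
  qed
qed

end


context DR begin

lemma DRG_mem: "(x,k,y) \<in> DRG D \<sigma> \<longleftrightarrow> (\<exists>m n. k = int m - int n \<and> x \<in> d m \<and> y \<in> d n \<and> s m x = s n y)"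
  by (auto simp: DRG_def)

lemma iso_mem: "h \<in> iso_at D \<sigma> x \<longleftrightarrow> (\<exists>k. h = (x,k,x) \<and> (x,k,x) \<in> DRG D \<sigma>)"
  by (cases h) (auto simp: iso_at_def gr_def gs_def)

lemma pp_fwd: assumes "x \<in> d b" "a \<le> b" "pp (s a x)" shows "pp (s b x)"
proof -
  have "s b x = s (b - a) (s a x)" using assms(2) by (simp add: s_comp)
  then show ?thesis using pp_iter[OF assms(3)] by simp
qed

lemma iso_char: "(x,k,x) \<in> DRG D \<sigma> \<longleftrightarrow> k = 0 \<or> (periodic_pt D \<sigma> x \<and> int (P x) dvd k)"
proof
  assume "(x,k,x) \<in> DRG D \<sigma>"
  then obtain m n where mn: "k = int m - int n" "x \<in> d m" "x \<in> d n" "s m x = s n x"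
    using DRG_mem by blast
  have gen: "periodic_pt D \<sigma> x \<and> P x dvd (a - b)" if "b < a" "x \<in> d a" "s a x = s b x" for a b
  proof -
    have "x \<in> d (b + (a - b))" using that by simp
    then have xb: "x \<in> d b" "s b x \<in> d (a - b)" using d_add by blast+
    have e: "s (a - b) (s b x) = s b x" using that by (simp add: s_comp)
    have ppy: "pp (s b x)" unfolding pp_def using xb e that by (intro exI[of _ "a - b"]) auto
    have per: "periodic_pt D \<sigma> x" using periodic_iff xb ppy by blast
    show ?thesis using P_dvd[OF per xb(1) ppy e] per by blast
  qed
  consider "m = n" | "n < m" | "m < n" by linarith
  then show "k = 0 \<or> (periodic_pt D \<sigma> x \<and> int (P x) dvd k)"
  proof cases
    case 1 then show ?thesis using mn by simp
  next
    case 2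
    then have "periodic_pt D \<sigma> x \<and> P x dvd (m - n)" using gen mn by blast
    then show ?thesis using mn 2
      by (metis int_dvd_int_iff less_imp_le_nat of_nat_diff)
  next
    case 3
    then have "periodic_pt D \<sigma> x \<and> P x dvd (n - m)" using gen mn by metis
    then have "periodic_pt D \<sigma> x \<and> int (P x) dvd (int n - int m)" using 3
      by (metis int_dvd_int_iff less_imp_le_nat of_nat_diff)
    then show ?thesis using mn by (metis dvd_minus_iff minus_diff_eq)
  qed
next
  assume A: "k = 0 \<or> (periodic_pt D \<sigma> x \<and> int (P x) dvd k)"
  show "(x,k,x) \<in> DRG D \<sigma>"
  proof (cases "k = 0")
    case True then show ?thesis unfolding DRG_mem by (intro exI[of _ 0]) simp
  next
    case False
    then have per: "periodic_pt D \<sigma> x" and dv: "int (P x) dvd k" using A by auto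
    obtain n0 where n0: "x \<in> d n0" "pp (s n0 x)" "s (P x) (s n0 x) = s n0 x" using P_pp[OF per] by blast
    have p1: "P x > 0" using P_ex(1)[OF per] by simp
    obtain j where j: "k = int (P x) * j" using dv by (auto simp: dvd_def)
    define t where "t = P x * nat \<bar>j\<bar>"
    have xt: "x \<in> d (n0 + t)" using n0 pp_d d_add by blast
    have st: "s (n0 + t) x = s n0 x"
    proof -
      have "s t (s n0 x) = s (t mod P x) (s n0 x)" using pp_mod[OF n0(3) p1] by blast
      then show ?thesis unfolding t_def by (simp add: s_comp add.commute)
    qed
    show ?thesis
    proof (cases "j \<ge> 0")
      case True
      then have "k = int (n0 + t) - int n0" unfolding t_def j by simp
      then show ?thesis unfolding DRG_mem using xt st n0 by blast
    next
      case False
      then have "k = int n0 - int (n0 + t)" unfolding t_def j by simp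
      then show ?thesis unfolding DRG_mem using xt st n0 by metis
    qed
  qed
qed

definition Lx where "Lx x = (LEAST l. x \<in> d l \<and> pp (s l x))"

lemma Lx_ex: assumes "periodic_pt D \<sigma> x" shows "x \<in> d (Lx x)" "pp (s (Lx x) x)"
proof -
  obtain n where "x \<in> d n \<and> pp (s n x)" using assms periodic_iff by blast
  then have "x \<in> d (Lx x) \<and> pp (s (Lx x) x)" unfolding Lx_def by (rule LeastI)
  then show "x \<in> d (Lx x)" "pp (s (Lx x) x)" by auto
qed

lemma Lx_le: "x \<in> d l \<Longrightarrow> pp (s l x) \<Longrightarrow> Lx x \<le> l"
  unfolding Lx_def by (rule Least_le) blast

lemma per_l_eq: assumes per: "periodic_pt D \<sigma> x" shows "per_l D \<sigma> x = enat (Lx x)"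
proof -
  have pp_eq: "(x \<in> d (P x + l) \<and> s (P x + l) x = s l x) \<longleftrightarrow> (x \<in> d l \<and> pp (s l x))" for l
  proof
    assume a: "x \<in> d (P x + l) \<and> s (P x + l) x = s l x"
    then have "x \<in> d (l + P x)" by (simp add: add.commute)
    then have b: "x \<in> d l" "s l x \<in> d (P x)" using d_add by blast+
    have "s (P x) (s l x) = s l x" using a by (simp add: s_comp)
    then show "x \<in> d l \<and> pp (s l x)" using b P_ex(1)[OF per] unfolding pp_def by (intro conjI exI[of _ "P x"]) auto
  next
    assume a: "x \<in> d l \<and> pp (s l x)"
    obtain n0 where n0: "x \<in> d n0" "pp (s n0 x)" "s (P x) (s n0 x) = s n0 x" using P_pp[OF per] by blast
    have "s (P x) (s n0 (s l x)) = s l (s (P x) (s n0 x))" by (simp add: s_comp ac_simps)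
    also have "\<dots> = s n0 (s l x)" using n0(3) by (simp add: s_comp add.commute)
    finally have "s (P x) (s l x) = s l x" using pp_shift a by blast
    moreover have "x \<in> d (l + P x)" using a pp_d d_add by blast
    ultimately show "x \<in> d (P x + l) \<and> s (P x + l) x = s l x"
      by (simp add: s_comp add.commute)
  qed
  have "the_enat (per_p D \<sigma> x) = P x" using P_per[OF per] by simp
  then show ?thesis unfolding per_l_def Lx_def using per pp_eq by simp
qed

lemma near_L_core:
  assumes x0: "x0 \<in> d m" "s m x0 = s n x0" "n < m"
  shows "\<exists>U. open U \<and> x0 \<in> U \<and> (\<forall>x\<in>U. x \<in> d m \<longrightarrow> s m x = s n x \<longrightarrow>
           periodic_pt D \<sigma> x \<and> Lx x = Lx x0)"
proof -
  define k where "k = m - n"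
  have k0: "k > 0" and mk: "m = n + k" using x0 unfolding k_def by auto
  have x0n: "x0 \<in> d n" "s n x0 \<in> d k" using x0(1) d_add mk by blast+
  have ppy: "pp (s n x0)" unfolding pp_def using x0n k0 x0(2) mk by (auto simp: s_comp add.commute)
  have per0: "periodic_pt D \<sigma> x0" using periodic_iff x0n ppy by blast
  define L0 where "L0 = Lx x0"
  have L0n: "L0 \<le> n" unfolding L0_def using Lx_le x0n ppy by blast
  have z0: "x0 \<in> d L0" "pp (s L0 x0)" using Lx_ex[OF per0] unfolding L0_def by auto
  have skz: "s k (s L0 x0) = s L0 x0"
  proof (rule pp_shift[OF z0(2), of k "n - L0"])
    have "s (n - L0) (s L0 x0) = s n x0" using L0n by (simp add: s_comp)
    moreover have "s k (s n x0) = s n x0" using x0(2) mk by (simp add: s_comp add.commute)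
    ultimately show "s k (s (n - L0) (s L0 x0)) = s (n - L0) (s L0 x0)" by simp
  qed
  have cyc: "s (j + k) x0 = s j x0" if "L0 \<le> j" for j
  proof -
    have "s (j + k) x0 = s (j - L0) (s k (s L0 x0))" using that by (simp add: s_comp ac_simps)
    also have "\<dots> = s j x0" using skz that by (simp add: s_comp)
    finally show ?thesis .
  qed
  have inD: "s j x0 \<in> D" if "L0 \<le> j" for j
  proof -
    have "s j x0 = s (j - L0) (s L0 x0)" using that by (simp add: s_comp)
    then show ?thesis using pp_D[OF z0(2)] by simp
  qed
  define I where "I j = (SOME I. open I \<and> s j x0 \<in> I \<and> I \<subseteq> D \<and> inj_on \<sigma> I)" for j
  have I: "open (I j) \<and> s j x0 \<in> I j \<and> I j \<subseteq> D \<and> inj_on \<sigma> (I j)" if "L0 \<le> j" for j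
    unfolding I_def by (rule someI_ex) (use loc_inj[OF inD[OF that]] in blast)
  define pre where "pre j = {x \<in> d j. s j x \<in> I j} \<inter> {x \<in> d (j + k). s (j + k) x \<in> I j}" for j
  define Ua where "Ua = (\<Inter>j\<in>{L0..<n}. pre j)"
  have oUa: "open Ua" unfolding Ua_def pre_def using I open_pre by (intro open_INT) auto
  have x0Ua: "x0 \<in> Ua"
  proof -
    have "x0 \<in> pre j" if "j \<in> {L0..<n}" for j
    proof -
      have "x0 \<in> d (j + k)" using d_mono[OF _ x0(1)] that mk by simp
      moreover have "x0 \<in> d j" using d_mono[OF _ x0(1)] that mk by simp
      ultimately show ?thesis unfolding pre_def using I[of j] cyc[of j] that by auto
    qed
    then show ?thesis unfolding Ua_def by blast
  qed
  have desc: "s (L0 + k) x = s L0 x" if x: "x \<in> Ua" "x \<in> d m" "s m x = s n x" for x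
  proof -
    have "s (n - i + k) x = s (n - i) x" if "i \<le> n - L0" for i
      using that
    proof (induction i)
      case 0
      then show ?case using x(3) mk by simp
    next
      case (Suc i)
      define j where "j = n - Suc i"
      have j: "j \<in> {L0..<n}" "n - i = Suc j" using Suc.prems unfolding j_def by auto
      have "s (Suc j + k) x = s (Suc j) x" using Suc j by simp
      then have e: "\<sigma> (s (j + k) x) = \<sigma> (s j x)" by simp
      have "x \<in> pre j" using x(1) j unfolding Ua_def by blast
      then have "s (j + k) x \<in> I j" "s j x \<in> I j" unfolding pre_def by auto
      then have "s (j + k) x = s j x" using I[of j] j e unfolding inj_on_def by auto
      then show ?case unfolding j_def[symmetric] .
    qed
    from this[of "n - L0"] show ?thesis using L0n by simp
  qed
  show ?thesis
  proof (cases "L0 = 0")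
    case True
    have "\<forall>x\<in>Ua. x \<in> d m \<longrightarrow> s m x = s n x \<longrightarrow> periodic_pt D \<sigma> x \<and> Lx x = Lx x0"
    proof (intro ballI impI)
      fix x assume x: "x \<in> Ua" "x \<in> d m" "s m x = s n x"
      have e: "s (L0 + k) x = s L0 x" using desc x by blast
      have xd: "x \<in> d (L0 + k)" using d_mono[OF _ x(2)] L0n mk by simp
      have "pp (s L0 x)" unfolding pp_def using e xd d_add[of x L0 k] k0 by (auto simp: s_comp add.commute)
      moreover have "x \<in> d L0" using xd d_add by blast
      ultimately have "periodic_pt D \<sigma> x" "Lx x \<le> L0" using periodic_iff Lx_le by blast+
      then show "periodic_pt D \<sigma> x \<and> Lx x = Lx x0" using True L0_def by simp
    qed
    then show ?thesis using oUa x0Ua by blast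
  next
    case False
    define j0 where "j0 = L0 - 1"
    have j0: "Suc j0 = L0" using False j0_def by simp
    have neq: "s (j0 + k) x0 \<noteq> s j0 x0"
    proof
      assume e: "s (j0 + k) x0 = s j0 x0"
      have xd: "x0 \<in> d (j0 + k)" using d_mono[OF _ x0(1)] j0 L0n mk by simp
      have "pp (s j0 x0)" unfolding pp_def using e xd d_add[of x0 j0 k] k0 by (auto simp: s_comp add.commute)
      moreover have "x0 \<in> d j0" using xd d_add by blast
      ultimately have "L0 \<le> j0" unfolding L0_def using Lx_le by blast
      then show False using j0 by simp
    qed
    obtain Ub where Ub: "open Ub" "x0 \<in> Ub" "\<forall>x\<in>Ub. x \<in> d (j0 + k) \<and> x \<in> d j0 \<and> s (j0 + k) x \<noteq> s j0 x"
    proof -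
      have "x0 \<in> d (j0 + k)" "x0 \<in> d j0" using d_mono[OF _ x0(1)] j0 L0n mk by auto
      then show ?thesis using sep[OF _ _ neq] that by blast
    qed
    have "\<forall>x\<in>Ua \<inter> Ub. x \<in> d m \<longrightarrow> s m x = s n x \<longrightarrow> periodic_pt D \<sigma> x \<and> Lx x = Lx x0"
    proof (intro ballI impI)
      fix x assume x: "x \<in> Ua \<inter> Ub" "x \<in> d m" "s m x = s n x"
      have e: "s (L0 + k) x = s L0 x" using desc x by blast
      have xd: "x \<in> d (L0 + k)" using d_mono[OF _ x(2)] L0n mk by simp
      have "pp (s L0 x)" unfolding pp_def using e xd d_add[of x L0 k] k0 by (auto simp: s_comp add.commute)
      moreover have xL: "x \<in> d L0" using xd d_add by blast
      ultimately have per: "periodic_pt D \<sigma> x" and le: "Lx x \<le> L0" using periodic_iff Lx_le by blast+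
      have "\<not> Lx x \<le> j0"
      proof
        assume "Lx x \<le> j0"
        have xj0: "x \<in> d j0" using Ub x by blast
        have ppj: "pp (s j0 x)" using pp_fwd[OF xj0 \<open>Lx x \<le> j0\<close> Lx_ex(2)[OF per]] .
        have "s k (s j0 x) = s j0 x"
        proof (rule pp_shift[OF ppj, of k "n - j0"])
          have "s (n - j0) (s j0 x) = s n x" using j0 L0n by (simp add: s_comp)
          moreover have "s k (s n x) = s n x" using x(3) mk by (simp add: s_comp add.commute)
          ultimately show "s k (s (n - j0) (s j0 x)) = s (n - j0) (s j0 x)" by simp
        qed
        then have "s (j0 + k) x = s j0 x" by (simp add: s_comp add.commute)
        then show False using Ub x by blast
      qed
      then show "periodic_pt D \<sigma> x \<and> Lx x = Lx x0" using per le j0 L0_def by simp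
    qed
    moreover have "open (Ua \<inter> Ub)" using oUa Ub by blast
    moreover have "x0 \<in> Ua \<inter> Ub" using x0Ua Ub by blast
    ultimately show ?thesis by blast
  qed
qed

lemma near_L:
  assumes "x0 \<in> d m" "x0 \<in> d n" "s m x0 = s n x0" "m \<noteq> n"
  shows "\<exists>U. open U \<and> x0 \<in> U \<and> (\<forall>x\<in>U. x \<in> d m \<longrightarrow> x \<in> d n \<longrightarrow> s m x = s n x \<longrightarrow>
           per_l D \<sigma> x = per_l D \<sigma> x0)"
proof -
  have per0: "periodic_pt D \<sigma> x0"
    using iso_char[of x0 "int m - int n"] DRG_mem assms by (metis eq_iff_diff_eq_0 of_nat_eq_iff)
  consider "n < m" | "m < n" using assms(4) by linarith
  then show ?thesis
  proof cases
    case 1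
    obtain U where U: "open U" "x0 \<in> U" "\<forall>x\<in>U. x \<in> d m \<longrightarrow> s m x = s n x \<longrightarrow> periodic_pt D \<sigma> x \<and> Lx x = Lx x0"
      using near_L_core[OF assms(1,3) 1] by blast
    then show ?thesis using per_l_eq per0 by (intro exI[of _ U]) auto
  next
    case 2
    obtain U where U: "open U" "x0 \<in> U" "\<forall>x\<in>U. x \<in> d n \<longrightarrow> s n x = s m x \<longrightarrow> periodic_pt D \<sigma> x \<and> Lx x = Lx x0"
      using near_L_core[OF assms(2) assms(3)[symmetric] 2] by blast
    then show ?thesis using per_l_eq per0 by (intro exI[of _ U]) auto
  qed
qed

end



lemma gen_basis:
  assumes "generate_topology_on S W" "x \<in> W"
  shows "\<exists>F. finite F \<and> F \<subseteq> S \<and> x \<in> \<Inter>F \<and> \<Inter>F \<subseteq> W"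
  using assms
proof (induction arbitrary: x rule: generate_topology_on.induct)
  case Empty then show ?case by simp
next
  case (Int a b)
  then obtain F1 F2 where "finite F1" "F1 \<subseteq> S" "x \<in> \<Inter>F1" "\<Inter>F1 \<subseteq> a"
    "finite F2" "F2 \<subseteq> S" "x \<in> \<Inter>F2" "\<Inter>F2 \<subseteq> b" by (meson IntE)
  then show ?case by (intro exI[of _ "F1 \<union> F2"]) auto
next
  case (UN K)
  then obtain k where "k \<in> K" "x \<in> k" by blast
  then obtain F where "finite F" "F \<subseteq> S" "x \<in> \<Inter>F" "\<Inter>F \<subseteq> k" using UN.IH[OF \<open>k \<in> K\<close> \<open>x \<in> k\<close>] by blast
  then show ?case using \<open>k \<in> K\<close> by (intro exI[of _ F]) auto
next
  case (Basis s)
  then have "finite {s} \<and> {s} \<subseteq> S \<and> x \<in> \<Inter>{s} \<and> \<Inter>{s} \<subseteq> s" by simp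
  then show ?case by blast
qed

context DR begin

abbreviation "T \<equiv> subtopology (DRG_top D \<sigma>) (iso_bundle D \<sigma>)"
abbreviation phi :: "'a gel \<Rightarrow> int" where "phi h \<equiv> fst (snd h)"

lemma Zset_mem: "(x,k,y) \<in> Zset D \<sigma> U m n V \<longleftrightarrow>
   k = int m - int n \<and> x \<in> U \<and> x \<in> d m \<and> y \<in> V \<and> y \<in> d n \<and> s m x = s n y"
  by (auto simp: Zset_def)

lemma Zset_sub: "Zset D \<sigma> U m n V \<subseteq> DRG D \<sigma>"
  by (auto simp: Zset_def DRG_def)

lemma top_DRG: "topspace (DRG_top D \<sigma>) = DRG D \<sigma>"
proof -
  have "\<Union>{Zset D \<sigma> U m n V | U m n V. open U \<and> open V} = DRG D \<sigma>"
  proof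
    show "\<Union>{Zset D \<sigma> U m n V | U m n V. open U \<and> open V} \<subseteq> DRG D \<sigma>" using Zset_sub by blast
    show "DRG D \<sigma> \<subseteq> \<Union>{Zset D \<sigma> U m n V | U m n V. open U \<and> open V}"
    proof
      fix h assume "h \<in> DRG D \<sigma>"
      then obtain x m n y where h: "h = (x, int m - int n, y)" "x \<in> d m" "y \<in> d n" "s m x = s n y"
        unfolding DRG_def by blast
      then have "h \<in> Zset D \<sigma> UNIV m n UNIV" using Zset_mem by simp
      then show "h \<in> \<Union>{Zset D \<sigma> U m n V | U m n V. open U \<and> open V}" by blast
    qed
  qed
  then show ?thesis unfolding DRG_top_def by simp
qed

lemma Z_open: "open U \<Longrightarrow> open V \<Longrightarrow> openin (DRG_top D \<sigma>) (Zset D \<sigma> U m n V)"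
  unfolding DRG_top_def by (rule topology_generated_by_Basis) blast

lemma gr_open: assumes "open U" shows "openin (DRG_top D \<sigma>) {h \<in> DRG D \<sigma>. gr h \<in> U}"
proof -
  have e: "((x,k,y) \<in> DRG D \<sigma> \<and> x \<in> U) \<longleftrightarrow> (\<exists>m n. (x,k,y) \<in> Zset D \<sigma> U m n UNIV)" for x k y
    unfolding DRG_mem Zset_mem by blast
  have "{h \<in> DRG D \<sigma>. gr h \<in> U} = \<Union>((\<lambda>(m,n). Zset D \<sigma> U m n UNIV) ` UNIV)"
  proof (rule set_eqI)
    fix h :: "'a gel" obtain x k y where h: "h = (x,k,y)" by (cases h) auto
    show "h \<in> {h \<in> DRG D \<sigma>. gr h \<in> U} \<longleftrightarrow> h \<in> \<Union>((\<lambda>(m,n). Zset D \<sigma> U m n UNIV) ` UNIV)"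
      using e[of x k y] unfolding h gr_def by auto
  qed
  moreover have "openin (DRG_top D \<sigma>) (\<Union>((\<lambda>(m,n). Zset D \<sigma> U m n UNIV) ` UNIV))"
    using Z_open assms by (intro openin_Union) auto
  ultimately show ?thesis by simp
qed

lemma slab_open: "openin (DRG_top D \<sigma>) {h \<in> DRG D \<sigma>. phi h \<in> A}"
proof -
  have e: "((x,k,y) \<in> DRG D \<sigma> \<and> k \<in> A) \<longleftrightarrow> (\<exists>m n. int m - int n \<in> A \<and> (x,k,y) \<in> Zset D \<sigma> UNIV m n UNIV)" for x k y
    unfolding DRG_mem Zset_mem by blast
  have "{h \<in> DRG D \<sigma>. phi h \<in> A} = \<Union>((\<lambda>(m,n). Zset D \<sigma> UNIV m n UNIV) ` {(m,n). int m - int n \<in> A})"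
  proof (rule set_eqI)
    fix h :: "'a gel" obtain x k y where h: "h = (x,k,y)" by (cases h) auto
    show "h \<in> {h \<in> DRG D \<sigma>. phi h \<in> A} \<longleftrightarrow> h \<in> \<Union>((\<lambda>(m,n). Zset D \<sigma> UNIV m n UNIV) ` {(m,n). int m - int n \<in> A})"
      using e[of x k y] unfolding h by auto
  qed
  moreover have "openin (DRG_top D \<sigma>) (\<Union>((\<lambda>(m,n). Zset D \<sigma> UNIV m n UNIV) ` {(m,n). int m - int n \<in> A}))"
    using Z_open by (intro openin_Union) auto
  ultimately show ?thesis by simp
qed

lemma iso_bundle_mem: "h \<in> iso_bundle D \<sigma> \<longleftrightarrow> (\<exists>x k. h = (x,k,x) \<and> (x,k,x) \<in> DRG D \<sigma>)"
  by (cases h) (auto simp: iso_bundle_def gr_def gs_def)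

lemma iso_bundle_sub: "iso_bundle D \<sigma> \<subseteq> DRG D \<sigma>"
  by (auto simp: iso_bundle_def)

lemma top_T: "topspace T = iso_bundle D \<sigma>"
  using top_DRG iso_bundle_sub by auto

lemma gr_cont: "continuous_map T euclidean gr"
proof -
  have "continuous_map (DRG_top D \<sigma>) euclidean gr"
    unfolding continuous_map using gr_open top_DRG by auto
  then show ?thesis by (rule continuous_map_from_subtopology)
qed

lemma slabT_open: "openin T {h \<in> iso_bundle D \<sigma>. phi h \<in> A}"
proof -
  have "{h \<in> iso_bundle D \<sigma>. phi h \<in> A} = {h \<in> DRG D \<sigma>. phi h \<in> A} \<inter> iso_bundle D \<sigma>"
    using iso_bundle_sub by auto
  then show ?thesis unfolding openin_subtopology using slab_open by blast
qed

lemma compact_slab: assumes "compactin T K" shows "compactin T {h \<in> K. phi h = k}"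
proof -
  have "closedin T {h \<in> iso_bundle D \<sigma>. phi h = k}"
  proof -
    have "topspace T - {h \<in> iso_bundle D \<sigma>. phi h = k} = {h \<in> iso_bundle D \<sigma>. phi h \<in> - {k}}"
      using top_T by auto
    moreover have "openin T {h \<in> iso_bundle D \<sigma>. phi h \<in> - {k}}" by (rule slabT_open)
    ultimately show ?thesis unfolding closedin_def using top_T by auto
  qed
  moreover have "{h \<in> K. phi h = k} = {h \<in> iso_bundle D \<sigma>. phi h = k} \<inter> K"
    using compactin_subset_topspace[OF assms] top_T by auto
  ultimately show ?thesis using closed_Int_compactin[OF _ assms] by simp
qed

lemma finite_phi: assumes "compactin T K" shows "finite (phi ` K)"
proof -
  let ?U = "(\<lambda>k. {h \<in> iso_bundle D \<sigma>. phi h \<in> {k}}) ` UNIV"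
  have "K \<subseteq> \<Union>?U" using compactin_subset_topspace[OF assms] top_T by auto
  moreover have "\<forall>U\<in>?U. openin T U" using slabT_open by blast
  ultimately obtain F where F: "finite F" "F \<subseteq> ?U" "K \<subseteq> \<Union>F"
    using assms unfolding compactin_def by meson
  then obtain K' where K': "finite K'" "F = (\<lambda>k. {h \<in> iso_bundle D \<sigma>. phi h \<in> {k}}) ` K'"
    by (meson finite_subset_image subset_UNIV)
  have "phi ` K \<subseteq> K'" using F(3) K'(2) by auto
  then show ?thesis using K'(1) finite_subset by blast
qed

lemma compact_gr_slab: assumes "compactin T K" shows "compact (gr ` {h \<in> K. phi h = k})"
  using image_compactin[OF compact_slab[OF assms] gr_cont] by simp

end



lemma circle_iff: "(z::complex) \<in> circle \<longleftrightarrow> norm z = 1" by simp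

lemma root_rot:
  assumes "(z::complex) \<in> circle" "w \<in> circle" "p > 0" "z ^ p = w ^ p"
  shows "\<exists>j::nat. z = cis (2 * pi / real p) ^ j * w"
proof -
  have w0: "w \<noteq> 0" using assms(2) by auto
  have "(z / w) ^ p = 1" using assms(4) w0 by (simp add: power_divide)
  then obtain k where k: "k < p" "z / w = cis (2 * pi * real k / real p)"
    using Complex.bij_betw_roots_unity[OF assms(3)] unfolding bij_betw_def by auto
  have "cis (2 * pi / real p) ^ k = cis (real k * (2 * pi / real p))" by (rule Complex.DeMoivre)
  then have "cis (2 * pi / real p) ^ k = cis (2 * pi * real k / real p)" by (simp add: field_simps)
  then show ?thesis using k w0 by (intro exI[of _ k]) (simp add: field_simps)
qed

lemma cis_pow_P: assumes "p > 0" shows "cis (2 * pi / real p) ^ p = 1"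
proof -
  have "cis (2 * pi / real p) ^ p = cis (real p * (2 * pi / real p))" by (rule Complex.DeMoivre)
  also have "real p * (2 * pi / real p) = 2 * pi" using assms by simp
  also have "cis (2 * pi) = 1" by (simp add: complex_eq_iff)
  finally show ?thesis .
qed

context DR begin

lemma qsnd: "snd (qmap D \<sigma> x z) = (\<lambda>h. if h \<in> iso_at D \<sigma> x then z powi phi h else 0)"
  by (simp add: qmap_def)

lemma qfst: "fst (qmap D \<sigma> x z) = x" by (simp add: qmap_def)

lemma qmap_ext: "(\<And>h. snd (qmap D \<sigma> x z) h = snd (qmap D \<sigma> x w) h) \<Longrightarrow> qmap D \<sigma> x z = qmap D \<sigma> x w"
proof -
  assume "\<And>h. snd (qmap D \<sigma> x z) h = snd (qmap D \<sigma> x w) h"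
  then have "snd (qmap D \<sigma> x z) = snd (qmap D \<sigma> x w)" by (rule ext)
  then show ?thesis by (simp add: qmap_def)
qed

lemma iso_at_iff: "h \<in> iso_at D \<sigma> x \<longleftrightarrow> (\<exists>k. h = (x,k,x) \<and> (k = 0 \<or> (periodic_pt D \<sigma> x \<and> int (P x) dvd k)))"
  using iso_mem iso_char by blast

lemma unit_iso: "(x,0,x) \<in> iso_at D \<sigma> x" using iso_at_iff by blast

lemma qmap_Stab: assumes "z \<in> circle" shows "qmap D \<sigma> x z \<in> Stab_dual D \<sigma>"
proof -
  have z0: "z \<noteq> 0" using assms by auto
  have c1: "\<forall>h\<in>iso_at D \<sigma> x. snd (qmap D \<sigma> x z) h \<in> circle"
    using assms by (simp add: qsnd norm_power_int)
  have c2: "\<forall>h1\<in>iso_at D \<sigma> x. \<forall>h2\<in>iso_at D \<sigma> x.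
      snd (qmap D \<sigma> x z) (gmul h1 h2) = snd (qmap D \<sigma> x z) h1 * snd (qmap D \<sigma> x z) h2"
  proof (intro ballI)
    fix h1 h2 assume h: "h1 \<in> iso_at D \<sigma> x" "h2 \<in> iso_at D \<sigma> x"
    then obtain a b where ab: "h1 = (x,a,x)" "h2 = (x,b,x)" using iso_mem by blast
    have "gmul h1 h2 = (x, a + b, x)" using ab by (simp add: gmul_def)
    moreover have "gmul h1 h2 \<in> iso_at D \<sigma> x"
      using h ab iso_at_iff by (auto simp: gmul_def)
    ultimately show "snd (qmap D \<sigma> x z) (gmul h1 h2) = snd (qmap D \<sigma> x z) h1 * snd (qmap D \<sigma> x z) h2"
      using h ab z0 by (simp add: qsnd power_int_add)
  qed
  have c3: "\<forall>h. h \<notin> iso_at D \<sigma> x \<longrightarrow> snd (qmap D \<sigma> x z) h = 0" by (simp add: qsnd)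
  have "is_char D \<sigma> x (snd (qmap D \<sigma> x z))" unfolding is_char_def using c1 c2 c3 by blast
  then show ?thesis unfolding Stab_dual_def qmap_def by simp
qed

lemma char_rep: assumes ch: "is_char D \<sigma> x ch" shows "\<exists>z\<in>circle. ch = snd (qmap D \<sigma> x z)"
proof -
  have circ: "\<And>h. h \<in> iso_at D \<sigma> x \<Longrightarrow> ch h \<in> circle"
    and mult: "\<And>h1 h2. h1 \<in> iso_at D \<sigma> x \<Longrightarrow> h2 \<in> iso_at D \<sigma> x \<Longrightarrow> ch (gmul h1 h2) = ch h1 * ch h2"
    and zero: "\<And>h. h \<notin> iso_at D \<sigma> x \<Longrightarrow> ch h = 0"
    using ch unfolding is_char_def by auto
  have mult': "ch (x, a + b, x) = ch (x,a,x) * ch (x,b,x)" if "(x,a,x) \<in> iso_at D \<sigma> x" "(x,b,x) \<in> iso_at D \<sigma> x" for a b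
    using mult[OF that] by (simp add: gmul_def)
  have e1: "ch (x,0,x) = 1"
  proof -
    have "ch (x,0,x) = ch (x,0,x) * ch (x,0,x)" using mult'[OF unit_iso unit_iso] by simp
    moreover have "ch (x,0,x) \<noteq> 0" using circ[OF unit_iso] by auto
    ultimately show ?thesis by (metis mult_cancel_left1)
  qed
  show ?thesis
  proof (cases "periodic_pt D \<sigma> x")
    case False
    then have "\<And>h. h \<in> iso_at D \<sigma> x \<Longrightarrow> h = (x,0,x)" using iso_at_iff by blast
    then have "ch = snd (qmap D \<sigma> x 1)" unfolding qsnd using e1 zero by (intro ext) auto
    then show ?thesis by force
  next
    case per: True
    define p where "p = P x"
    have p0: "p > 0" using P_ex(1)[OF per] p_def by simp
    have isoj: "(x, int p * j, x) \<in> iso_at D \<sigma> x" for j using iso_at_iff per p_def by auto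
    define c where "c = ch (x, int p, x)"
    have c1: "norm c = 1" using circ[OF isoj[of 1]] c_def by simp
    have c0: "c \<noteq> 0" using c1 by auto
    define f where "f j = ch (x, int p * j, x)" for j
    have fadd: "f (a + b) = f a * f b" for a b
      using mult'[OF isoj[of a] isoj[of b]] unfolding f_def by (simp add: distrib_left)
    have fnat: "f (int n) = c ^ n" for n
    proof (induction n)
      case 0 then show ?case using e1 f_def by simp
    next
      case (Suc n)
      have "f (int (Suc n)) = f (int n + 1)" by (simp add: add.commute)
      also have "\<dots> = f (int n) * f 1" by (rule fadd)
      finally show ?case using Suc c_def f_def by simp
    qed
    have fall: "f j = c powi j" for j
    proof (cases "j \<ge> 0")
      case True then show ?thesis using fnat[of "nat j"] by (simp add: power_int_def)
    next
      case False
      define n where "n = nat (- j)"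
      have j: "j = - int n" using False n_def by simp
      have "f (- int n) * f (int n) = f 0" using fadd[of "- int n" "int n"] by simp
      then have "f (- int n) * c ^ n = 1" using fnat e1 f_def by simp
      then have "f (- int n) = inverse (c ^ n)" using c0 by (simp add: field_simps)
      then show ?thesis using j by (simp add: power_int_def power_inverse)
    qed
    define z where "z = cis (Arg c / real p)"
    have z1: "z \<in> circle" unfolding z_def by simp
    have zp: "z ^ p = c"
    proof -
      have "z ^ p = cis (real p * (Arg c / real p))" unfolding z_def by (rule Complex.DeMoivre)
      also have "\<dots> = cis (Arg c)" using p0 by simp
      also have "\<dots> = sgn c" using cis_Arg c0 by simp
      also have "\<dots> = c" using c1 by (simp add: sgn_eq)
      finally show ?thesis .
    qed
    have "ch = snd (qmap D \<sigma> x z)"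
    proof (rule ext)
      fix h show "ch h = snd (qmap D \<sigma> x z) h"
      proof (cases "h \<in> iso_at D \<sigma> x")
        case True
        then obtain k where k: "h = (x,k,x)" "k = 0 \<or> int p dvd k" using iso_at_iff p_def by blast
        then obtain j where j: "k = int p * j" by (metis dvd_def mult_zero_right)
        have "ch h = c powi j" using fall[of j] unfolding f_def k(1) j by simp
        also have "\<dots> = z powi (int p * j)" using zp by (simp add: power_int_mult)
        finally show ?thesis using True k j by (simp add: qsnd)
      qed (use zero qsnd in simp)
    qed
    then show ?thesis using z1 by blast
  qed
qed

lemma qmap_phi: assumes "h \<in> iso_at D \<sigma> x" "periodic_pt D \<sigma> x"
  obtains j where "phi h = int (P x) * j"
proof -
  obtain k where k: "h = (x,k,x)" "k = 0 \<or> int (P x) dvd k" using assms iso_at_iff by blast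
  then obtain j where "k = int (P x) * j" by (metis dvd_def mult_zero_right)
  then show ?thesis using that[of j] k by simp
qed

lemma rot_inv: assumes per: "periodic_pt D \<sigma> x"
  shows "qmap D \<sigma> x (cis (2 * pi / real (P x)) * z) = qmap D \<sigma> x z"
proof -
  let ?w = "cis (2 * pi / real (P x))"
  have p0: "P x > 0" using P_ex(1)[OF per] by simp
  have "?w powi (int (P x) * j) = 1" for j
    using cis_pow_P[OF p0] by (simp add: power_int_mult)
  note w1 = this
  have "snd (qmap D \<sigma> x (?w * z)) h = snd (qmap D \<sigma> x z) h" for h
  proof (cases "h \<in> iso_at D \<sigma> x")
    case True
    obtain j where j: "phi h = int (P x) * j" using qmap_phi[OF True per] by blast
    have "(?w * z) powi phi h = ?w powi phi h * z powi phi h" by (rule power_int_mult_distrib)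
    moreover have "?w powi phi h = 1" using j w1 by simp
    ultimately show ?thesis using True by (simp add: qsnd)
  qed (simp add: qsnd)
  then show ?thesis by (rule qmap_ext)
qed

lemma qmap_eq_iff: assumes per: "periodic_pt D \<sigma> x"
  shows "qmap D \<sigma> x z = qmap D \<sigma> x w \<longleftrightarrow> z ^ P x = w ^ P x"
proof
  assume "qmap D \<sigma> x z = qmap D \<sigma> x w"
  then have "snd (qmap D \<sigma> x z) (x, int (P x), x) = snd (qmap D \<sigma> x w) (x, int (P x), x)" by simp
  moreover have "(x, int (P x), x) \<in> iso_at D \<sigma> x" using iso_at_iff[of "(x, int (P x), x)" x] per by simp
  ultimately show "z ^ P x = w ^ P x" by (simp add: qsnd)
next
  assume e: "z ^ P x = w ^ P x"
  have "snd (qmap D \<sigma> x z) h = snd (qmap D \<sigma> x w) h" for h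
  proof (cases "h \<in> iso_at D \<sigma> x")
    case True
    then obtain j where "phi h = int (P x) * j" using qmap_phi[OF True per] by blast
    then show ?thesis using e True by (simp add: qsnd power_int_mult)
  qed (simp add: qsnd)
  then show "qmap D \<sigma> x z = qmap D \<sigma> x w" by (rule qmap_ext)
qed

lemma qmap_nonper: assumes "\<not> periodic_pt D \<sigma> x" shows "qmap D \<sigma> x z = qmap D \<sigma> x w"
proof -
  have "snd (qmap D \<sigma> x z) h = snd (qmap D \<sigma> x w) h" for h
    using assms iso_at_iff by (auto simp: qsnd)
  then show ?thesis by (rule qmap_ext)
qed

lemma DRG_inv: "(x,a,y) \<in> DRG D \<sigma> \<Longrightarrow> (y,-a,x) \<in> DRG D \<sigma>"
  unfolding DRG_mem by (metis minus_diff_eq)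

lemma DRG_mult: assumes "(x,a,y) \<in> DRG D \<sigma>" "(y,b,w) \<in> DRG D \<sigma>" shows "(x,a+b,w) \<in> DRG D \<sigma>"
proof -
  obtain m n where mn: "a = int m - int n" "x \<in> d m" "y \<in> d n" "s m x = s n y" using assms(1) DRG_mem by blast
  obtain m' n' where mn': "b = int m' - int n'" "y \<in> d m'" "w \<in> d n'" "s m' y = s n' w" using assms(2) DRG_mem by blast
  show ?thesis
  proof (cases "n \<le> m'")
    case True
    have "y \<in> d (n + (m' - n))" using mn'(2) True by simp
    then have "s n y \<in> d (m' - n)" using d_add by blast
    then have "x \<in> d (m + (m' - n))" using mn d_add by simp
    moreover have "s (m + (m' - n)) x = s n' w"
    proof -
      have "s (m + (m' - n)) x = s (m' - n) (s m x)" by (simp add: s_comp add.commute)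
      also have "\<dots> = s (m' - n) (s n y)" using mn by simp
      also have "\<dots> = s m' y" using True by (simp add: s_comp)
      finally show ?thesis using mn' by simp
    qed
    moreover have "a + b = int (m + (m' - n)) - int n'" using mn mn' True by simp
    ultimately show ?thesis unfolding DRG_mem using mn' by blast
  next
    case False
    have "y \<in> d (m' + (n - m'))" using mn(3) False by simp
    then have "s m' y \<in> d (n - m')" using d_add by blast
    then have "w \<in> d (n' + (n - m'))" using mn' d_add by simp
    moreover have "s (n' + (n - m')) w = s m x"
    proof -
      have "s (n' + (n - m')) w = s (n - m') (s n' w)" by (simp add: s_comp add.commute)
      also have "\<dots> = s (n - m') (s m' y)" using mn' by simp
      also have "\<dots> = s n y" using False by (simp add: s_comp)
      finally show ?thesis using mn by simp
    qed
    moreover have "a + b = int m - int (n' + (n - m'))" using mn mn' False by simp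
    ultimately show ?thesis unfolding DRG_mem using mn by metis
  qed
qed

lemma act_qmap: assumes g: "(a,k,b) \<in> DRG D \<sigma>"
  shows "act D \<sigma> (a,k,b) (b, snd (qmap D \<sigma> b z)) = qmap D \<sigma> a z"
proof -
  have "(\<lambda>h. if h \<in> iso_at D \<sigma> a then snd (qmap D \<sigma> b z) (gmul (gmul (ginv (a,k,b)) h) (a,k,b)) else 0)
        = snd (qmap D \<sigma> a z)"
  proof (rule ext)
    fix h show "(if h \<in> iso_at D \<sigma> a then snd (qmap D \<sigma> b z) (gmul (gmul (ginv (a,k,b)) h) (a,k,b)) else 0)
        = snd (qmap D \<sigma> a z) h"
    proof (cases "h \<in> iso_at D \<sigma> a")
      case True
      then obtain j where h: "h = (a,j,a)" "(a,j,a) \<in> DRG D \<sigma>" using iso_mem by blast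
      have "(b, -k + j, a) \<in> DRG D \<sigma>" using DRG_mult[OF DRG_inv[OF g] h(2)] .
      then have "(b, -k + j + k, b) \<in> DRG D \<sigma>" using DRG_mult g by blast
      then have "(b, j, b) \<in> iso_at D \<sigma> b" using iso_mem by simp
      moreover have "gmul (gmul (ginv (a,k,b)) h) (a,k,b) = (b,j,b)" using h by (simp add: gmul_def ginv_def)
      ultimately show ?thesis using True h by (simp add: qsnd)
    qed (simp add: qsnd)
  qed
  moreover have "act D \<sigma> (a,k,b) (b, snd (qmap D \<sigma> b z)) =
     (a, \<lambda>h. if h \<in> iso_at D \<sigma> a then snd (qmap D \<sigma> b z) (gmul (gmul (ginv (a,k,b)) h) (a,k,b)) else 0)"
    unfolding act_def gr_def snd_conv fst_conv by (rule refl)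
  ultimately have "act D \<sigma> (a,k,b) (b, snd (qmap D \<sigma> b z)) = (a, snd (qmap D \<sigma> a z))"
    by simp
  also have "\<dots> = qmap D \<sigma> a z" by (simp add: qmap_def)
  finally show ?thesis .
qed

end


context DR begin

abbreviation "SB \<equiv> {Oset D \<sigma> U K V | U K V. open U \<and> compactin T K \<and> openin (top_of_set circle) V}"

lemma Stab_top_eq: "Stab_top D \<sigma> = topology_generated_by SB"
  unfolding Stab_top_def by simp

lemma Oset_sub: "Oset D \<sigma> U K V \<subseteq> Stab_dual D \<sigma>" by (auto simp: Oset_def)

lemma Oset_mem: "p \<in> Oset D \<sigma> U K V \<longleftrightarrow> p \<in> Stab_dual D \<sigma> \<and> fst p \<in> U \<and> snd p ` (K \<inter> iso_at D \<sigma> (fst p)) \<subseteq> V"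
  by (cases p) (auto simp: Oset_def)

lemma Oset_full: "Oset D \<sigma> UNIV {} circle = Stab_dual D \<sigma>" by (auto simp: Oset_def)

lemma Oset_full_SB: "Stab_dual D \<sigma> \<in> SB"
proof -
  have "compactin T {}" by simp
  moreover have "openin (top_of_set circle) circle" by simp
  ultimately show ?thesis using Oset_full[symmetric] by blast
qed

lemma top_Stab: "topspace (Stab_top D \<sigma>) = Stab_dual D \<sigma>"
proof -
  have "\<Union>SB = Stab_dual D \<sigma>" using Oset_sub Oset_full_SB by blast
  then show ?thesis unfolding Stab_top_eq by simp
qed

lemma K_iso: assumes "compactin T K" "h \<in> K" shows "h \<in> iso_at D \<sigma> x \<longleftrightarrow> gr h = x"
proof -
  have "h \<in> iso_bundle D \<sigma>" using compactin_subset_topspace[OF assms(1)] top_T assms(2) by auto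
  then obtain y k where h: "h = (y,k,y)" "(y,k,y) \<in> DRG D \<sigma>" using iso_bundle_mem by blast
  then show ?thesis using iso_mem by (auto simp: gr_def)
qed

lemma closed_pow_set: assumes "openin (top_of_set circle) V"
  shows "compact {z \<in> circle. z powi k \<notin> V}"
proof -
  obtain V' where V': "open V'" "V = circle \<inter> V'" using assms openin_open by blast
  have eq: "{z \<in> circle. z powi k \<notin> V} = circle \<inter> (\<lambda>z. z powi k) -` (- V')"
    using V' by (auto simp: norm_power_int)
  have "continuous_on circle (\<lambda>z::complex. z powi k)"
    by (intro continuous_on_power_int continuous_on_id) auto
  then have "closed (circle \<inter> (\<lambda>z. z powi k) -` (- V'))"
    using V'(1) by (intro continuous_closed_preimage) auto
  moreover have "bounded (circle \<inter> (\<lambda>z::complex. z powi k) -` (- V'))"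
    using bounded_subset[OF bounded_sphere] by blast
  ultimately show ?thesis unfolding eq using compact_eq_bounded_closed by blast
qed

lemma q_pre_open: assumes "open U" "compactin T K" "openin (top_of_set circle) V"
  shows "openin (top_of_set (UNIV \<times> circle)) ((\<lambda>(x,z). qmap D \<sigma> x z) -` Oset D \<sigma> U K V \<inter> (UNIV \<times> circle))"
proof -
  define R where "R = (\<Union>k\<in>phi ` K. gr ` {h \<in> K. phi h = k} \<times> {z \<in> circle. z powi k \<notin> V})"
  have "compact R" unfolding R_def
    using finite_phi[OF assms(2)] compact_gr_slab[OF assms(2)] closed_pow_set[OF assms(3)]
    by (intro compact_UN compact_Times) auto
  then have cR: "closed R" by (rule compact_imp_closed)
  have eq: "(\<lambda>(x,z). qmap D \<sigma> x z) -` Oset D \<sigma> U K V \<inter> (UNIV \<times> circle) = (UNIV \<times> circle) \<inter> ((U \<times> UNIV) - R)"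
  proof (rule set_eqI)
    fix xz :: "'a \<times> complex"
    obtain x z where xz: "xz = (x,z)" by (cases xz) auto
    show "xz \<in> (\<lambda>(x,z). qmap D \<sigma> x z) -` Oset D \<sigma> U K V \<inter> (UNIV \<times> circle) \<longleftrightarrow> xz \<in> (UNIV \<times> circle) \<inter> ((U \<times> UNIV) - R)"
    proof (cases "z \<in> circle")
      case True
      have "qmap D \<sigma> x z \<in> Oset D \<sigma> U K V \<longleftrightarrow> x \<in> U \<and> (\<forall>h\<in>K. gr h = x \<longrightarrow> z powi phi h \<in> V)"
      proof -
        have "qmap D \<sigma> x z \<in> Oset D \<sigma> U K V \<longleftrightarrow> x \<in> U \<and> snd (qmap D \<sigma> x z) ` (K \<inter> iso_at D \<sigma> x) \<subseteq> V"
          using qmap_Stab[OF True, of x] unfolding Oset_mem qfst by blast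
        also have "\<dots> \<longleftrightarrow> x \<in> U \<and> (\<forall>h\<in>K. gr h = x \<longrightarrow> z powi phi h \<in> V)"
        proof -
          have A: "K \<inter> iso_at D \<sigma> x = {h\<in>K. gr h = x}" using K_iso[OF assms(2)] by blast
          have B: "snd (qmap D \<sigma> x z) ` {h\<in>K. gr h = x} = (\<lambda>h. z powi phi h) ` {h\<in>K. gr h = x}"
          proof (rule image_cong)
            fix h assume "h \<in> {h\<in>K. gr h = x}"
            then have "h \<in> iso_at D \<sigma> x" using K_iso[OF assms(2)] by blast
            then show "snd (qmap D \<sigma> x z) h = z powi phi h" by (simp add: qsnd)
          qed simp
          show ?thesis unfolding A B by blast
        qed
        finally show ?thesis .
      qed
      moreover have "(x,z) \<in> R \<longleftrightarrow> (\<exists>h\<in>K. gr h = x \<and> z powi phi h \<notin> V)"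
        unfolding R_def using True by auto
      ultimately show ?thesis using True xz by auto
    qed (use xz in auto)
  qed
  have "open ((U \<times> UNIV) - R)" using assms(1) cR by (intro open_Diff open_Times) auto
  then show ?thesis unfolding eq by (rule openin_open_Int)
qed

lemma q_cont: "continuous_map (top_of_set (UNIV \<times> circle)) (Stab_top D \<sigma>) (\<lambda>(x,z). qmap D \<sigma> x z)"
  unfolding Stab_top_eq
proof (rule continuous_on_generated_topo)
  fix Wb assume "Wb \<in> SB"
  then obtain U K V where O: "Wb = Oset D \<sigma> U K V" "open U" "compactin T K" "openin (top_of_set circle) V" by blast
  show "openin (top_of_set (UNIV \<times> circle)) ((\<lambda>(x,z). qmap D \<sigma> x z) -` Wb \<inter> topspace (top_of_set (UNIV \<times> circle)))"
    using q_pre_open[OF O(2-4)] O(1) by simp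
next
  have "\<Union>SB = Stab_dual D \<sigma>" using Oset_sub Oset_full_SB by blast
  then show "(\<lambda>(x,z). qmap D \<sigma> x z) ` topspace (top_of_set (UNIV \<times> circle)) \<subseteq> \<Union>SB"
    using qmap_Stab by auto
qed

lemma fiber_iter: assumes "\<forall>x\<in>D. F x = F (\<sigma> x)" shows "x \<in> d m \<Longrightarrow> F x = F (s m x)"
proof (induction m)
  case (Suc m)
  then have "x \<in> d m" "s m x \<in> D" using d_Suc by auto
  then show ?case using Suc assms by simp
qed simp

lemma fiber_orbit: assumes "\<forall>x\<in>D. F x = F (\<sigma> x)" "(a,k,b) \<in> DRG D \<sigma>" shows "F a = F b"
proof -
  obtain m n where "a \<in> d m" "b \<in> d n" "s m a = s n b" using assms(2) DRG_mem by blast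
  then show ?thesis using fiber_iter[OF assms(1)] by metis
qed

end


context DR begin

lemma fiber_eq: "fiber {(x, z) \<in> UNIV \<times> circle. qmap D \<sigma> x z \<in> C} x = {z \<in> circle. qmap D \<sigma> x z \<in> C}"
  by (auto simp: fiber_def)

lemma inv_transport: assumes "invariant D \<sigma> C" "(a,k,b) \<in> DRG D \<sigma>" "qmap D \<sigma> b z \<in> C"
  shows "qmap D \<sigma> a z \<in> C"
proof -
  have "(b, snd (qmap D \<sigma> b z)) = qmap D \<sigma> b z" by (simp add: qmap_def)
  then have "(gs (a,k,b), snd (qmap D \<sigma> b z)) \<in> C" using assms(3) by (simp add: gs_def)
  then have "act D \<sigma> (a,k,b) (gs (a,k,b), snd (qmap D \<sigma> b z)) \<in> C"
    using assms(1,2) unfolding invariant_def by blast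
  then show ?thesis using act_qmap[OF assms(2)] by (simp add: gs_def)
qed

lemma Kneigh: assumes K: "compactin T K"
  shows "\<exists>G. open G \<and> x0 \<in> G \<and> (\<forall>h\<in>K. gr h \<in> G \<longrightarrow>
           (phi h = 0 \<and> (x0,0,x0) \<in> K) \<or> per_l D \<sigma> (gr h) = per_l D \<sigma> x0)"
proof -
  define Q where "Q h \<longleftrightarrow> (phi h = 0 \<and> (x0,0,x0) \<in> K) \<or> per_l D \<sigma> (gr h) = per_l D \<sigma> x0" for h
  have Kiso: "K \<subseteq> iso_bundle D \<sigma>" using compactin_subset_topspace[OF K] top_T by simp
  have loc: "\<exists>N. openin (DRG_top D \<sigma>) N \<and> h \<in> N \<and> (\<exists>G. open G \<and> x0 \<in> G \<and> (\<forall>h'\<in>K \<inter> N. gr h' \<in> G \<longrightarrow> Q h'))"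
    if hK: "h \<in> K" for h
  proof -
    obtain y k where h: "h = (y,k,y)" "(y,k,y) \<in> DRG D \<sigma>" using Kiso hK iso_bundle_mem by blast
    show ?thesis
    proof (cases "y = x0")
      case False
      obtain A B where AB: "open A" "open B" "y \<in> A" "x0 \<in> B" "A \<inter> B = {}" using hausdorff[OF False] by blast
      have "openin (DRG_top D \<sigma>) {h \<in> DRG D \<sigma>. gr h \<in> A}" using gr_open[OF AB(1)] .
      moreover have "h \<in> {h \<in> DRG D \<sigma>. gr h \<in> A}" using h AB by (simp add: gr_def)
      moreover have "\<forall>h'\<in>K \<inter> {h \<in> DRG D \<sigma>. gr h \<in> A}. gr h' \<in> B \<longrightarrow> Q h'" using AB by blast
      ultimately show ?thesis using AB by blast
    next
      case True
      show ?thesis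
      proof (cases "k = 0")
        case True
        have "openin (DRG_top D \<sigma>) {h \<in> DRG D \<sigma>. phi h \<in> {0}}" by (rule slab_open)
        moreover have "h \<in> {h \<in> DRG D \<sigma>. phi h \<in> {0}}" using h True by simp
        moreover have "\<forall>h'\<in>K \<inter> {h \<in> DRG D \<sigma>. phi h \<in> {0}}. gr h' \<in> UNIV \<longrightarrow> Q h'"
          using hK h True \<open>y = x0\<close> unfolding Q_def by auto
        ultimately show ?thesis by blast
      next
        case False
        obtain m n where mn: "k = int m - int n" "y \<in> d m" "y \<in> d n" "s m y = s n y" using h DRG_mem by blast
        have mn0: "m \<noteq> n" using mn False by auto
        obtain G where G: "open G" "x0 \<in> G" "\<forall>x\<in>G. x \<in> d m \<longrightarrow> x \<in> d n \<longrightarrow> s m x = s n x \<longrightarrow> per_l D \<sigma> x = per_l D \<sigma> x0"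
          using near_L[OF mn(2-4) mn0] \<open>y = x0\<close> by blast
        have "openin (DRG_top D \<sigma>) (Zset D \<sigma> UNIV m n UNIV)" by (rule Z_open) auto
        moreover have "h \<in> Zset D \<sigma> UNIV m n UNIV" using h mn Zset_mem by simp
        moreover have "\<forall>h'\<in>K \<inter> Zset D \<sigma> UNIV m n UNIV. gr h' \<in> G \<longrightarrow> Q h'"
        proof (intro ballI impI)
          fix h' assume h': "h' \<in> K \<inter> Zset D \<sigma> UNIV m n UNIV" "gr h' \<in> G"
          obtain x k' where x: "h' = (x,k',x)" using Kiso h' iso_bundle_mem by blast
          have "x \<in> d m" "x \<in> d n" "s m x = s n x" using h' x Zset_mem by auto
          then show "Q h'" using G h' x unfolding Q_def by (simp add: gr_def)
        qed
        ultimately show ?thesis using G by blast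
      qed
    qed
  qed
  define Nf where "Nf h = (SOME N. openin (DRG_top D \<sigma>) N \<and> h \<in> N \<and>
     (\<exists>G. open G \<and> x0 \<in> G \<and> (\<forall>h'\<in>K \<inter> N. gr h' \<in> G \<longrightarrow> Q h')))" for h
  have Nf1: "openin (DRG_top D \<sigma>) (Nf h) \<and> h \<in> Nf h \<and>
     (\<exists>G. open G \<and> x0 \<in> G \<and> (\<forall>h'\<in>K \<inter> Nf h. gr h' \<in> G \<longrightarrow> Q h'))" if "h \<in> K" for h
    unfolding Nf_def by (rule someI_ex) (rule loc[OF that])
  then have Nf: "\<forall>h\<in>K. openin (DRG_top D \<sigma>) (Nf h) \<and> h \<in> Nf h" by blast
  define Gf where "Gf h = (SOME G. open G \<and> x0 \<in> G \<and> (\<forall>h'\<in>K \<inter> Nf h. gr h' \<in> G \<longrightarrow> Q h'))" for h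
  have Gf1: "open (Gf h) \<and> x0 \<in> Gf h \<and> (\<forall>h'\<in>K \<inter> Nf h. gr h' \<in> Gf h \<longrightarrow> Q h')" if "h \<in> K" for h
    unfolding Gf_def by (rule someI_ex) (use Nf1[OF that] in blast)
  then have Gf: "\<forall>h\<in>K. open (Gf h) \<and> x0 \<in> Gf h \<and> (\<forall>h'\<in>K \<inter> Nf h. gr h' \<in> Gf h \<longrightarrow> Q h')" by blast
  let ?U = "(\<lambda>h. Nf h \<inter> iso_bundle D \<sigma>) ` K"
  have "\<forall>U\<in>?U. openin T U" using Nf unfolding openin_subtopology by blast
  moreover have "K \<subseteq> \<Union>?U" using Nf Kiso by blast
  ultimately obtain F where F: "finite F" "F \<subseteq> ?U" "K \<subseteq> \<Union>F" using K unfolding compactin_def by meson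
  then obtain K' where K': "K' \<subseteq> K" "finite K'" "F = (\<lambda>h. Nf h \<inter> iso_bundle D \<sigma>) ` K'"
    by (meson finite_subset_image)
  define G where "G = \<Inter>(Gf ` K')"
  have "open G" unfolding G_def using K' Gf by (intro open_INT) auto
  moreover have "x0 \<in> G" unfolding G_def using K' Gf by auto
  moreover have "\<forall>h\<in>K. gr h \<in> G \<longrightarrow> Q h"
  proof (intro ballI impI)
    fix h assume h: "h \<in> K" "gr h \<in> G"
    then obtain h0 where h0: "h0 \<in> K'" "h \<in> Nf h0" using F(3) K'(3) by blast
    then have "gr h \<in> Gf h0" using h unfolding G_def by blast
    then show "Q h" using Gf h0 h K'(1) by blast
  qed
  ultimately show ?thesis unfolding Q_def by blast
qed

lemma dir1:
  assumes C: "closedin (Stab_top D \<sigma>) C" "invariant D \<sigma> C"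
    and Y: "Y = {(x, z) \<in> UNIV \<times> circle. qmap D \<sigma> x z \<in> C}"
  shows "closedin (top_of_set (UNIV \<times> circle)) Y \<and>
          (\<forall>x\<in>D. fiber Y x = fiber Y (\<sigma> x)) \<and>
          (\<forall>x0. fiber Y x0 \<noteq> {} \<and> fiber Y x0 \<noteq> circle \<longrightarrow>
              periodic_pt D \<sigma> x0 \<and>
              (\<lambda>z. cis (2 * pi / real (the_enat (per_p D \<sigma> x0))) * z) ` fiber Y x0 = fiber Y x0 \<and>
              (\<exists>V. open V \<and> x0 \<in> V \<and>
                 (\<forall>x\<in>V. per_l D \<sigma> x \<noteq> per_l D \<sigma> x0 \<longrightarrow> fiber Y x = {})))"
proof (intro conjI allI impI ballI)
  have fib: "fiber Y x = {z \<in> circle. qmap D \<sigma> x z \<in> C}" for x using fiber_eq Y by simp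
  show "closedin (top_of_set (UNIV \<times> circle)) Y"
  proof -
    have "closedin (top_of_set (UNIV \<times> circle)) {xz \<in> topspace (top_of_set (UNIV \<times> circle)). (\<lambda>(x,z). qmap D \<sigma> x z) xz \<in> C}"
      by (rule closedin_continuous_map_preimage[OF q_cont C(1)])
    moreover have "{xz \<in> topspace (top_of_set (UNIV \<times> circle)). (\<lambda>(x,z). qmap D \<sigma> x z) xz \<in> C} = Y"
      using Y by auto
    ultimately show ?thesis by simp
  qed
  fix x assume xD: "x \<in> D"
  have g1: "(\<sigma> x, -1, x) \<in> DRG D \<sigma>"
  proof -
    have "x \<in> d 1" using xD by (simp add: dom_iter_def)
    then show ?thesis unfolding DRG_mem by (intro exI[of _ 0] exI[of _ 1]) simp
  qed
  have g2: "(x, 1, \<sigma> x) \<in> DRG D \<sigma>" using DRG_inv[OF g1] by simp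
  show "fiber Y x = fiber Y (\<sigma> x)"
    unfolding fib using inv_transport[OF C(2) g1] inv_transport[OF C(2) g2] by blast
next
  have fib: "fiber Y x = {z \<in> circle. qmap D \<sigma> x z \<in> C}" for x using fiber_eq Y by simp
  fix x0 assume F: "fiber Y x0 \<noteq> {} \<and> fiber Y x0 \<noteq> circle"
  then obtain z0 where z0: "z0 \<in> circle" "qmap D \<sigma> x0 z0 \<in> C" unfolding fib by blast
  obtain w where w: "w \<in> circle" "qmap D \<sigma> x0 w \<notin> C" using F unfolding fib by blast
  show per: "periodic_pt D \<sigma> x0"
  proof (rule ccontr)
    assume "\<not> periodic_pt D \<sigma> x0"
    then have "qmap D \<sigma> x0 w = qmap D \<sigma> x0 z0" by (rule qmap_nonper)
    then show False using z0 w by simp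
  qed
  have pp: "the_enat (per_p D \<sigma> x0) = P x0" using P_per[OF per] by simp
  let ?w = "cis (2 * pi / real (P x0))"
  have w1: "?w \<in> circle" by simp
  have w0: "?w \<noteq> 0" by simp
  show "(\<lambda>z. cis (2 * pi / real (the_enat (per_p D \<sigma> x0))) * z) ` fiber Y x0 = fiber Y x0"
    unfolding pp
  proof
    show "(\<lambda>z. ?w * z) ` fiber Y x0 \<subseteq> fiber Y x0"
      unfolding fib using rot_inv[OF per] by (auto simp: norm_mult)
    show "fiber Y x0 \<subseteq> (\<lambda>z. ?w * z) ` fiber Y x0"
    proof
      fix z assume z: "z \<in> fiber Y x0"
      have e: "?w * (z / ?w) = z" using w0 by simp
      have "qmap D \<sigma> x0 (z / ?w) = qmap D \<sigma> x0 z" using rot_inv[OF per, of "z / ?w"] e by simp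
      moreover have "z / ?w \<in> circle" using z unfolding fib by (simp add: norm_divide)
      ultimately have "z / ?w \<in> fiber Y x0" using z unfolding fib by simp
      then show "z \<in> (\<lambda>z. ?w * z) ` fiber Y x0" using e by (metis image_eqI)
    qed
  qed
  have p0S: "qmap D \<sigma> x0 w \<in> Stab_dual D \<sigma> - C" using qmap_Stab[OF w(1)] w(2) by blast
  have "openin (Stab_top D \<sigma>) (Stab_dual D \<sigma> - C)"
    using C(1) unfolding closedin_def top_Stab by blast
  then have "generate_topology_on SB (Stab_dual D \<sigma> - C)"
    unfolding Stab_top_eq by (rule openin_topology_generated_by)
  then have "\<exists>F. finite F \<and> F \<subseteq> SB \<and> qmap D \<sigma> x0 w \<in> \<Inter>F \<and> \<Inter>F \<subseteq> Stab_dual D \<sigma> - C"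
    by (rule gen_basis[OF _ p0S])
  then obtain Fs where Fs0: "finite Fs \<and> Fs \<subseteq> SB \<and> qmap D \<sigma> x0 w \<in> \<Inter>Fs \<and> \<Inter>Fs \<subseteq> Stab_dual D \<sigma> - C" ..
  note Fs = conjunct1[OF Fs0] conjunct1[OF conjunct2[OF Fs0]] conjunct1[OF conjunct2[OF conjunct2[OF Fs0]]]
    conjunct2[OF conjunct2[OF conjunct2[OF Fs0]]]
  have loc: "\<exists>G. open G \<and> x0 \<in> G \<and> (\<forall>x\<in>G. per_l D \<sigma> x \<noteq> per_l D \<sigma> x0 \<longrightarrow> (\<forall>z\<in>circle. qmap D \<sigma> x z \<in> Ob))"
    if Ob: "Ob \<in> Fs" for Ob
  proof -
    obtain U K V where O: "Ob = Oset D \<sigma> U K V" "open U" "compactin T K" "openin (top_of_set circle) V"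
      using Fs(2) Ob by blast
    have p0O: "qmap D \<sigma> x0 w \<in> Oset D \<sigma> U K V" using Fs(3) Ob O(1) by blast
    obtain G where G: "open G" "x0 \<in> G" "\<forall>h\<in>K. gr h \<in> G \<longrightarrow> (phi h = 0 \<and> (x0,0,x0) \<in> K) \<or> per_l D \<sigma> (gr h) = per_l D \<sigma> x0"
      using Kneigh[OF O(3)] by blast
    have x0U: "x0 \<in> U" using p0O unfolding Oset_mem qfst by blast
    have "\<forall>x\<in>U \<inter> G. per_l D \<sigma> x \<noteq> per_l D \<sigma> x0 \<longrightarrow> (\<forall>z\<in>circle. qmap D \<sigma> x z \<in> Ob)"
    proof (intro ballI impI)
      fix x z assume x: "x \<in> U \<inter> G" "per_l D \<sigma> x \<noteq> per_l D \<sigma> x0" and z: "z \<in> circle"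
      have "snd (qmap D \<sigma> x z) ` (K \<inter> iso_at D \<sigma> x) \<subseteq> V"
      proof
        fix v assume "v \<in> snd (qmap D \<sigma> x z) ` (K \<inter> iso_at D \<sigma> x)"
        then obtain h where h: "h \<in> K" "h \<in> iso_at D \<sigma> x" "v = snd (qmap D \<sigma> x z) h" by blast
        have grh: "gr h = x" using K_iso[OF O(3) h(1)] h(2) by blast
        then have h0: "phi h = 0" "(x0,0,x0) \<in> K" using G(3) h(1) x by auto
        have "v = 1" using h(2,3) h0 by (simp add: qsnd)
        moreover have "snd (qmap D \<sigma> x0 w) (x0,0,x0) \<in> V"
          using p0O h0(2) unit_iso unfolding Oset_mem qfst by blast
        ultimately show "v \<in> V" using unit_iso by (simp add: qsnd)
      qed
      then show "qmap D \<sigma> x z \<in> Ob" unfolding O(1) Oset_mem qfst using qmap_Stab[OF z] x by blast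
    qed
    then show ?thesis using G O(2) x0U by (intro exI[of _ "U \<inter> G"]) auto
  qed
  define Gf where "Gf Ob = (SOME G. open G \<and> x0 \<in> G \<and> (\<forall>x\<in>G. per_l D \<sigma> x \<noteq> per_l D \<sigma> x0 \<longrightarrow> (\<forall>z\<in>circle. qmap D \<sigma> x z \<in> Ob)))" for Ob
  have Gf1: "open (Gf Ob) \<and> x0 \<in> Gf Ob \<and> (\<forall>x\<in>Gf Ob. per_l D \<sigma> x \<noteq> per_l D \<sigma> x0 \<longrightarrow> (\<forall>z\<in>circle. qmap D \<sigma> x z \<in> Ob))"
    if "Ob \<in> Fs" for Ob
    unfolding Gf_def by (rule someI_ex) (rule loc[OF that])
  then have Gf: "\<forall>Ob\<in>Fs. open (Gf Ob) \<and> x0 \<in> Gf Ob \<and>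
     (\<forall>x\<in>Gf Ob. per_l D \<sigma> x \<noteq> per_l D \<sigma> x0 \<longrightarrow> (\<forall>z\<in>circle. qmap D \<sigma> x z \<in> Ob))" by blast
  define Vn where "Vn = \<Inter>(Gf ` Fs)"
  have "open Vn" unfolding Vn_def using Fs(1) Gf by (intro open_INT) auto
  moreover have "x0 \<in> Vn" unfolding Vn_def using Gf by auto
  moreover have "\<forall>x\<in>Vn. per_l D \<sigma> x \<noteq> per_l D \<sigma> x0 \<longrightarrow> fiber Y x = {}"
  proof (intro ballI impI)
    fix x assume x: "x \<in> Vn" "per_l D \<sigma> x \<noteq> per_l D \<sigma> x0"
    show "fiber Y x = {}"
    proof (rule ccontr)
      assume "fiber Y x \<noteq> {}"
      then obtain z where z: "z \<in> circle" "qmap D \<sigma> x z \<in> C" unfolding fib by blast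
      have "qmap D \<sigma> x z \<in> \<Inter>Fs" using Gf x z unfolding Vn_def by blast
      then show False using Fs(4) z by blast
    qed
  qed
  ultimately show "\<exists>V. open V \<and> x0 \<in> V \<and> (\<forall>x\<in>V. per_l D \<sigma> x \<noteq> per_l D \<sigma> x0 \<longrightarrow> fiber Y x = {})"
    by blast
qed

end



lemma norm_cis1: "norm (cis t - 1) \<le> \<bar>t\<bar>"
proof -
  have "(norm (cis t - 1))\<^sup>2 = (cos t - 1)\<^sup>2 + (sin t)\<^sup>2" by (simp add: cmod_power2)
  also have "\<dots> = 2 - 2 * cos t" using sin_cos_squared_add[of t] by (simp add: power2_eq_square algebra_simps)
  also have "cos t = 1 - 2 * sin (t/2) ^ 2" using cos_double_sin[of "t/2"] by simp
  also have "2 - 2 * (1 - 2 * sin (t/2) ^ 2) = 4 * (sin (t/2))\<^sup>2" by simp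
  also have "\<dots> \<le> 4 * (t/2)\<^sup>2"
  proof -
    have "\<bar>sin (t/2)\<bar> \<le> \<bar>t/2\<bar>" by (rule abs_sin_x_le_abs_x)
    then have "(sin (t/2))\<^sup>2 \<le> (t/2)\<^sup>2" by (metis abs_le_square_iff)
    then show ?thesis by simp
  qed
  also have "\<dots> = \<bar>t\<bar>\<^sup>2" by (simp add: power2_eq_square)
  finally show ?thesis by (rule power2_le_imp_le) simp
qed

lemma norm_cis_sub: "norm (cis a - cis b) \<le> \<bar>a - b\<bar>"
proof -
  have "cis a - cis b = cis b * (cis (a - b) - 1)" by (simp add: cis_mult algebra_simps)
  then have "norm (cis a - cis b) = norm (cis (a - b) - 1)" by (simp add: norm_mult)
  then show ?thesis using norm_cis1 by simp
qed

lemma dense_rot: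
  assumes "(u::complex) \<in> circle" "w \<in> circle" "p > 0"
  shows "\<exists>j::nat. norm (cis (2 * pi / real p) ^ j * u - w) \<le> 2 * pi / real p"
proof -
  define \<delta> where "\<delta> = 2 * pi / real p"
  have d0: "\<delta> > 0" unfolding \<delta>_def using assms(3) by simp
  define \<alpha> where "\<alpha> = Arg u"
  define \<beta> where "\<beta> = Arg w"
  have cA: "v = cis (Arg v)" if "v \<in> circle" for v :: complex
  proof -
    have "v \<noteq> 0" "norm v = 1" using that by auto
    then show ?thesis using cis_Arg[of v] by (simp add: sgn_eq)
  qed
  have u: "u = cis \<alpha>" unfolding \<alpha>_def using cA assms(1) .
  have w: "w = cis \<beta>" unfolding \<beta>_def using cA assms(2) .
  define k where "k = \<lceil>\<bar>\<beta> - \<alpha>\<bar>\<rceil>"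
  define \<theta> where "\<theta> = \<beta> - \<alpha> + 2 * pi * of_int k"
  have "of_int k \<ge> \<bar>\<beta> - \<alpha>\<bar>" unfolding k_def by simp
  moreover have "k \<ge> 0" unfolding k_def by simp
  moreover have "1 * real_of_int k \<le> (2 * pi) * real_of_int k"
    by (rule mult_right_mono) (use pi_gt3 \<open>k \<ge> 0\<close> in auto)
  ultimately have "2 * pi * of_int k \<ge> \<bar>\<beta> - \<alpha>\<bar>" by linarith
  then have t0: "\<theta> \<ge> 0" unfolding \<theta>_def by linarith
  have wt: "w = cis (\<alpha> + \<theta>)"
  proof -
    have "cis (\<alpha> + \<theta>) = cis (\<beta> + 2 * pi * of_int k)" unfolding \<theta>_def by (simp add: algebra_simps)
    also have "\<dots> = cis \<beta> * cis (2 * pi * of_int k)" by (simp only: cis_mult)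
    also have "cis (2 * pi * of_int k) = 1" by (rule cis_multiple_2pi) simp
    finally show ?thesis using w by simp
  qed
  define j where "j = nat \<lfloor>\<theta> / \<delta>\<rfloor>"
  have fl0: "\<lfloor>\<theta> / \<delta>\<rfloor> \<ge> 0" using t0 d0 by simp
  have j1: "real j \<le> \<theta> / \<delta>" unfolding j_def using fl0 by (metis of_int_floor_le of_nat_nat)
  have j2: "\<theta> / \<delta> < real j + 1" unfolding j_def using fl0 by (metis floor_correct of_int_of_nat_eq nat_0_le add.commute of_int_1 of_int_add)
  have j1': "real j * \<delta> \<le> \<theta>" using j1 d0 by (simp add: field_simps)
  have j2': "\<theta> < real j * \<delta> + \<delta>" using j2 d0 by (simp add: field_simps)
  have "cis \<delta> ^ j * u = cis (\<alpha> + real j * \<delta>)" using u by (simp add: Complex.DeMoivre cis_mult add.commute)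
  then have "norm (cis \<delta> ^ j * u - w) = norm (cis (\<alpha> + real j * \<delta>) - cis (\<alpha> + \<theta>))" using wt by simp
  also have "\<dots> \<le> \<bar>(\<alpha> + real j * \<delta>) - (\<alpha> + \<theta>)\<bar>" by (rule norm_cis_sub)
  also have "\<dots> \<le> \<delta>" using j1' j2' by simp
  finally show ?thesis unfolding \<delta>_def by blast
qed

lemma rot_iter: assumes "(\<lambda>z. (c::complex) * z) ` F = F" "z \<in> F" shows "c ^ j * z \<in> F"
proof (induction j)
  case 0 then show ?case using assms(2) by simp
next
  case (Suc j)
  then have "c * (c ^ j * z) \<in> (\<lambda>z. c * z) ` F" by blast
  then show ?case using assms(1) by (simp add: mult.assoc)
qed

lemma Hausdorff_t2: "Hausdorff_space (euclidean :: 'a::t2_space topology)"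
  unfolding Hausdorff_space_def disjnt_def using hausdorff by auto

context DR begin

lemma P_cycle: assumes per: "periodic_pt D \<sigma> x" and a: "x \<in> d l" "pp (s l x)"
  shows "x \<in> d (P x + l) \<and> s (P x + l) x = s l x"
proof -
  obtain n0 where n0: "x \<in> d n0" "pp (s n0 x)" "s (P x) (s n0 x) = s n0 x" using P_pp[OF per] by blast
  have "s (P x) (s n0 (s l x)) = s l (s (P x) (s n0 x))" by (simp add: s_comp ac_simps)
  also have "\<dots> = s n0 (s l x)" using n0(3) by (simp add: s_comp add.commute)
  finally have "s (P x) (s l x) = s l x" using pp_shift a by blast
  moreover have "x \<in> d (l + P x)" using a pp_d d_add by blast
  ultimately show ?thesis by (simp add: s_comp add.commute)
qed

lemma Lx_eq: assumes "periodic_pt D \<sigma> x" "periodic_pt D \<sigma> y" "per_l D \<sigma> x = per_l D \<sigma> y"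
  shows "Lx x = Lx y"
  using assms per_l_eq by simp

end


context DR begin

context
  fixes Y :: "('a \<times> complex) set"
  assumes lc: "locally_compact_space (euclidean :: 'a topology)"
    and Ysub: "Y \<subseteq> UNIV \<times> circle"
    and Ycl: "closedin (top_of_set (UNIV \<times> circle)) Y"
    and Yii: "\<forall>x\<in>D. fiber Y x = fiber Y (\<sigma> x)"
    and Yiii: "\<forall>x0. fiber Y x0 \<noteq> {} \<and> fiber Y x0 \<noteq> circle \<longrightarrow>
              periodic_pt D \<sigma> x0 \<and>
              (\<lambda>z. cis (2 * pi / real (the_enat (per_p D \<sigma> x0))) * z) ` fiber Y x0 = fiber Y x0 \<and>
              (\<exists>V. open V \<and> x0 \<in> V \<and>
                 (\<forall>x\<in>V. per_l D \<sigma> x \<noteq> per_l D \<sigma> x0 \<longrightarrow> fiber Y x = {}))"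
begin

lemma fibY: "z \<in> fiber Y x \<longleftrightarrow> (x,z) \<in> Y"
proof -
  have c: "(x,z) \<in> Y \<Longrightarrow> z \<in> circle" using Ysub by (auto simp only: mem_Times_iff subset_iff snd_conv)
  show ?thesis
  proof
    assume "z \<in> fiber Y x" then show "(x,z) \<in> Y" by (simp add: fiber_def)
  next
    assume h: "(x,z) \<in> Y"
    then have "z \<in> circle" by (rule c)
    then show "z \<in> fiber Y x" using h by (simp add: fiber_def)
  qed
qed

lemma propY: assumes "fiber Y x \<noteq> {}" "fiber Y x \<noteq> circle"
  shows "periodic_pt D \<sigma> x" "(\<lambda>z. cis (2 * pi / real (P x)) * z) ` fiber Y x = fiber Y x"
    "\<exists>V. open V \<and> x \<in> V \<and> (\<forall>x'\<in>V. per_l D \<sigma> x' \<noteq> per_l D \<sigma> x \<longrightarrow> fiber Y x' = {})"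
proof -
  have A: "periodic_pt D \<sigma> x \<and>
              (\<lambda>z. cis (2 * pi / real (the_enat (per_p D \<sigma> x))) * z) ` fiber Y x = fiber Y x \<and>
              (\<exists>V. open V \<and> x \<in> V \<and> (\<forall>x'\<in>V. per_l D \<sigma> x' \<noteq> per_l D \<sigma> x \<longrightarrow> fiber Y x' = {}))"
    by (rule mp[OF spec[OF Yiii, of x] conjI[OF assms]])
  show per: "periodic_pt D \<sigma> x" by (rule conjunct1[OF A])
  have "the_enat (per_p D \<sigma> x) = P x" using P_per[OF per] by simp
  then show "(\<lambda>z. cis (2 * pi / real (P x)) * z) ` fiber Y x = fiber Y x" using conjunct1[OF conjunct2[OF A]] by simp
  show "\<exists>V. open V \<and> x \<in> V \<and> (\<forall>x'\<in>V. per_l D \<sigma> x' \<noteq> per_l D \<sigma> x \<longrightarrow> fiber Y x' = {})"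
    by (rule conjunct2[OF conjunct2[OF A]])
qed

lemma openSB: "Ob \<in> SB \<Longrightarrow> openin (Stab_top D \<sigma>) Ob"
  unfolding Stab_top_eq by (rule topology_generated_by_Basis)

lemma Yc_ex: obtains Yc where "closed Yc" "Y = (UNIV \<times> circle) \<inter> Yc"
  using Ycl closedin_closed by metis

lemma empty_nbhd:
  assumes F: "fiber Y x0 = {}" and p: "p \<in> Stab_dual D \<sigma>" "fst p = x0"
  shows "\<exists>T. openin (Stab_top D \<sigma>) T \<and> p \<in> T \<and> T \<inter> {qmap D \<sigma> x z | x z. (x,z) \<in> Y} = {}"
proof -
  obtain Yc where Yc: "closed Yc" "Y = (UNIV \<times> circle) \<inter> Yc" using Yc_ex by blast
  have "{x0} \<times> circle \<subseteq> - Yc"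
  proof
    fix xz assume "xz \<in> {x0} \<times> circle"
    then obtain z where z: "xz = (x0,z)" "z \<in> circle" by blast
    show "xz \<in> - Yc"
    proof
      assume "xz \<in> Yc"
      then have "(x0,z) \<in> Y" using z Yc(2) by blast
      then have "z \<in> fiber Y x0" using fibY by blast
      then show False using F by blast
    qed
  qed
  then obtain X0 where X0: "x0 \<in> X0" "open X0" "X0 \<times> circle \<subseteq> - Yc"
  proof -
    have "open (- Yc)" using Yc(1) by (rule open_Compl)
    from Elementary_Topology.tube_lemma[OF compact_sphere this \<open>{x0} \<times> circle \<subseteq> - Yc\<close>] show ?thesis using that by blast
  qed
  have "compactin T {}" by simp
  then have "Oset D \<sigma> X0 {} circle \<in> SB" using X0(2) by force
  then have op: "openin (Stab_top D \<sigma>) (Oset D \<sigma> X0 {} circle)" by (rule openSB)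
  have pin: "p \<in> Oset D \<sigma> X0 {} circle" using p X0(1) unfolding Oset_mem by simp
  have "Oset D \<sigma> X0 {} circle \<inter> {qmap D \<sigma> x z | x z. (x,z) \<in> Y} = {}"
  proof (rule ccontr)
    assume "Oset D \<sigma> X0 {} circle \<inter> {qmap D \<sigma> x z | x z. (x,z) \<in> Y} \<noteq> {}"
    then obtain x z where xz: "(x,z) \<in> Y" "qmap D \<sigma> x z \<in> Oset D \<sigma> X0 {} circle" by blast
    then have "x \<in> X0" unfolding Oset_mem qfst by blast
    moreover have "z \<in> circle" using xz Ysub by auto
    ultimately have "(x,z) \<notin> Yc" using X0(3) by blast
    then show False using xz Yc by blast
  qed
  then show ?thesis using op pin by blast
qed


lemma proper_nbhd:
  assumes F1: "fiber Y x0 \<noteq> {}" and F2: "fiber Y x0 \<noteq> circle"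
    and w: "w \<in> circle" "w \<notin> fiber Y x0"
  shows "\<exists>T. openin (Stab_top D \<sigma>) T \<and> qmap D \<sigma> x0 w \<in> T \<and> T \<inter> {qmap D \<sigma> x z | x z. (x,z) \<in> Y} = {}"
proof -
  have per0: "periodic_pt D \<sigma> x0" by (rule propY(1)[OF F1 F2])
  obtain V0 where V0: "open V0" "x0 \<in> V0" "\<forall>x'\<in>V0. per_l D \<sigma> x' \<noteq> per_l D \<sigma> x0 \<longrightarrow> fiber Y x' = {}"
    using propY(3)[OF F1 F2] by blast
  define l0 where "l0 = Lx x0"
  have cyc0: "x0 \<in> d l0" "pp (s l0 x0)" using Lx_ex[OF per0] unfolding l0_def by auto
  have x0d: "x0 \<in> d (l0 + j)" for j using cyc0 pp_d d_add by blast
  obtain Yc where Yc: "closed Yc" "Y = (UNIV \<times> circle) \<inter> Yc" using Yc_ex by blast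
  have "(x0, w) \<notin> Yc"
  proof
    assume "(x0, w) \<in> Yc"
    then have "(x0, w) \<in> Y" using Yc(2) w(1) by blast
    then show False using w(2) fibY by blast
  qed
  then have "(x0, w) \<in> - Yc" by blast
  then obtain A B where AB: "open A" "open B" "(x0, w) \<in> A \<times> B" "A \<times> B \<subseteq> - Yc"
    using open_prod_elim[OF open_Compl[OF Yc(1)]] by metis
  obtain \<epsilon> where e: "\<epsilon> > 0" "cball w \<epsilon> \<subseteq> B" using AB(2,3) open_contains_cball by blast
  have tube: "z \<notin> fiber Y x" if "x \<in> A" "dist w z \<le> \<epsilon>" for x z
  proof
    assume "z \<in> fiber Y x"
    then have "(x,z) \<in> Y" using fibY by blast
    then have "(x,z) \<in> Yc" using Yc(2) by blast
    moreover have "(x,z) \<in> A \<times> B" using that e(2) by auto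
    ultimately show False using AB(4) by blast
  qed
  have x0A: "x0 \<in> A" using AB(3) by simp
  obtain N :: nat where N: "2 * pi / \<epsilon> < real N" using reals_Archimedean2 by blast
  have bnd: "periodic_pt D \<sigma> x \<and> P x \<le> N \<and> fiber Y x \<noteq> circle \<and>
             (\<lambda>z. cis (2 * pi / real (P x)) * z) ` fiber Y x = fiber Y x"
    if x: "x \<in> A" "fiber Y x \<noteq> {}" for x
  proof -
    have nc: "fiber Y x \<noteq> circle"
    proof
      assume "fiber Y x = circle"
      then have "w \<in> fiber Y x" using w(1) by simp
      then show False using tube[OF x(1), of w] e(1) by simp
    qed
    have perx: "periodic_pt D \<sigma> x" by (rule propY(1)[OF x(2) nc])
    have rotx: "(\<lambda>z. cis (2 * pi / real (P x)) * z) ` fiber Y x = fiber Y x" by (rule propY(2)[OF x(2) nc])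
    have "P x \<le> N"
    proof (rule ccontr)
      assume "\<not> P x \<le> N"
      then have PN: "real N < real (P x)" by simp
      have P0: "P x > 0" using P_ex(1)[OF perx] by simp
      obtain u where u: "u \<in> fiber Y x" using x(2) by blast
      have uc: "u \<in> circle" using u unfolding fiber_def by blast
      obtain j where j: "norm (cis (2 * pi / real (P x)) ^ j * u - w) \<le> 2 * pi / real (P x)"
        using dense_rot[OF uc w(1) P0] by blast
      have "2 * pi / real (P x) < \<epsilon>"
      proof -
        have "2 * pi / \<epsilon> < real (P x)" using N PN by linarith
        then have "2 * pi < \<epsilon> * real (P x)" using e(1) by (simp add: field_simps)
        then show ?thesis using P0 by (simp add: field_simps)
      qed
      then have "dist w (cis (2 * pi / real (P x)) ^ j * u) \<le> \<epsilon>"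
        using j by (simp add: dist_norm norm_minus_commute)
      moreover have "cis (2 * pi / real (P x)) ^ j * u \<in> fiber Y x" by (rule rot_iter[OF rotx u])
      ultimately show False using tube[OF x(1)] by blast
    qed
    then show ?thesis using perx nc rotx by blast
  qed
  define Qbad where "Qbad = {q. 1 \<le> q \<and> q \<le> N \<and> \<not> P x0 dvd q}"
  have fQbad: "finite Qbad" unfolding Qbad_def by (rule finite_subset[of _ "{..N}"]) auto
  have neqbad: "s (l0 + q) x0 \<noteq> s l0 x0" if "q \<in> Qbad" for q
  proof
    assume e: "s (l0 + q) x0 = s l0 x0"
    have "s q (s l0 x0) = s l0 x0" using e by (simp add: s_comp add.commute)
    then have "P x0 dvd q" using P_dvd[OF per0 cyc0] by blast
    then show False using that unfolding Qbad_def by blast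
  qed
  define Ub where "Ub q = (SOME U. open U \<and> x0 \<in> U \<and> (\<forall>x\<in>U. x \<in> d (l0 + q) \<and> x \<in> d l0 \<and> s (l0 + q) x \<noteq> s l0 x))" for q
  have Ub: "open (Ub q) \<and> x0 \<in> Ub q \<and> (\<forall>x\<in>Ub q. x \<in> d (l0 + q) \<and> x \<in> d l0 \<and> s (l0 + q) x \<noteq> s l0 x)"
    if "q \<in> Qbad" for q
    unfolding Ub_def by (rule someI_ex) (rule sep[OF x0d cyc0(1) neqbad[OF that]])
  define U2 where "U2 = (\<Inter>q\<in>Qbad. Ub q)"
  have oU2: "open U2" unfolding U2_def using fQbad Ub by (intro open_INT) auto
  have x0U2: "x0 \<in> U2" unfolding U2_def using Ub by blast
  define Q where "Q = {q. 1 \<le> q \<and> q \<le> N \<and> P x0 dvd q}"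
  have fQ: "finite Q" unfolding Q_def by (rule finite_subset[of _ "{..N}"]) auto
  have P0cyc: "s (P x0) (s l0 x0) = s l0 x0"
    using P_cycle[OF per0 cyc0] by (simp add: s_comp add.commute)
  have P00: "P x0 > 0" using P_ex(1)[OF per0] by simp
  have eqgood: "s (l0 + q) x0 = s l0 x0" if "q \<in> Q" for q
  proof -
    have "s q (s l0 x0) = s (q mod P x0) (s l0 x0)" by (rule pp_mod[OF P0cyc P00])
    also have "q mod P x0 = 0" using that unfolding Q_def by simp
    finally show ?thesis by (simp add: s_comp add.commute)
  qed
  define GL where "GL q = (SOME G. open G \<and> x0 \<in> G \<and> (\<forall>x\<in>G. x \<in> d (l0 + q) \<longrightarrow> x \<in> d l0 \<longrightarrow>
       s (l0 + q) x = s l0 x \<longrightarrow> per_l D \<sigma> x = per_l D \<sigma> x0))" for q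
  have GL: "open (GL q) \<and> x0 \<in> GL q \<and> (\<forall>x\<in>GL q. x \<in> d (l0 + q) \<longrightarrow> x \<in> d l0 \<longrightarrow>
       s (l0 + q) x = s l0 x \<longrightarrow> per_l D \<sigma> x = per_l D \<sigma> x0)" if q: "q \<in> Q" for q
  proof -
    have "l0 + q \<noteq> l0" using q unfolding Q_def by simp
    then show ?thesis unfolding GL_def by (rule someI_ex[OF near_L[OF x0d cyc0(1) eqgood[OF q]]])
  qed
  define Gbig where "Gbig = (\<Inter>q\<in>Q. GL q \<inter> d (l0 + q))"
  have oGbig: "open Gbig" unfolding Gbig_def using fQ GL open_d by (intro open_INT) auto
  have x0G: "x0 \<in> Gbig" unfolding Gbig_def using GL x0d by blast
  have nb: "neighbourhood_base_of (compactin euclidean) (euclidean :: 'a topology)"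
    using locally_compact_space_neighbourhood_base[OF disjI1[OF Hausdorff_t2]] lc by blast
  obtain Ui Wc where UW: "open Ui" "compact Wc" "x0 \<in> Ui" "Ui \<subseteq> Wc" "Wc \<subseteq> Gbig"
    using nb oGbig x0G unfolding neighbourhood_base_of by (metis open_openin compactin_euclidean_iff)
  define E where "E q = {x \<in> Wc. s (l0 + q) x = s l0 x}" for q
  define eq where "eq q x = (x, int q, x)" for q and x :: 'a
  have WcQ: "x \<in> GL q \<and> x \<in> d (l0 + q)" if "x \<in> Wc" "q \<in> Q" for x q
    using that UW(5) unfolding Gbig_def by blast
  have Efacts: "periodic_pt D \<sigma> x \<and> Lx x = l0 \<and> pp (s l0 x) \<and> s q (s l0 x) = s l0 x \<and> x \<in> d l0"
    if x: "x \<in> E q" and q: "q \<in> Q" for x q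
  proof -
    have xW: "x \<in> Wc" "s (l0 + q) x = s l0 x" using x unfolding E_def by auto
    have xd: "x \<in> d (l0 + q)" "x \<in> GL q" using WcQ[OF xW(1) q] by auto
    have q1: "q \<ge> 1" using q unfolding Q_def by simp
    have xl: "x \<in> d l0" "s l0 x \<in> d q" using xd(1) d_add by blast+
    have sq: "s q (s l0 x) = s l0 x" using xW(2) by (simp add: s_comp add.commute)
    have ppx: "pp (s l0 x)" unfolding pp_def using xl(2) sq q1 by (intro exI[of _ q]) simp
    have perx: "periodic_pt D \<sigma> x" using periodic_iff xl(1) ppx by blast
    have "per_l D \<sigma> x = per_l D \<sigma> x0" using GL[OF q] xd xl(1) xW(2) by blast
    then have "Lx x = l0" unfolding l0_def by (rule Lx_eq[OF perx per0])
    then show ?thesis using perx ppx sq xl(1) by blast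
  qed
  have cE: "compact (E q)" if q: "q \<in> Q" for q
  proof -
    define Bd where "Bd = {x \<in> d (l0 + q). s (l0 + q) x \<noteq> s l0 x}"
    have "open Bd"
    proof (subst open_subopen, intro ballI)
      fix x assume "x \<in> Bd"
      then have "x \<in> d (l0 + q)" "x \<in> d l0" "s (l0 + q) x \<noteq> s l0 x" unfolding Bd_def using d_mono[of l0 "l0+q"] by auto
      from sep[OF this] obtain U where "open U" "x \<in> U" "\<forall>x\<in>U. x \<in> d (l0 + q) \<and> x \<in> d l0 \<and> s (l0 + q) x \<noteq> s l0 x" by blast
      then show "\<exists>T. open T \<and> x \<in> T \<and> T \<subseteq> Bd" unfolding Bd_def by blast
    qed
    then have "closed (- Bd)" by (simp add: closed_Compl)
    moreover have "E q = Wc \<inter> - Bd" unfolding E_def Bd_def using WcQ[OF _ q] by blast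
    ultimately show ?thesis using UW(2) by (simp add: compact_Int_closed)
  qed
  have DRGe: "eq q x \<in> DRG D \<sigma>" if "x \<in> E q" "q \<in> Q" for x q
  proof -
    have xW: "x \<in> Wc" "s (l0 + q) x = s l0 x" using that unfolding E_def by auto
    have xd: "x \<in> d (l0 + q)" using WcQ[OF xW(1) that(2)] by blast
    have "x \<in> d l0" using d_mono[OF _ xd] by simp
    then show ?thesis unfolding eq_def DRG_mem using xd xW(2) by (intro exI[of _ "l0 + q"] exI[of _ l0]) simp
  qed
  have conte: "continuous_map (top_of_set (E q)) T (eq q)" if q: "q \<in> Q" for q
  proof (rule continuous_map_into_subtopology)
    show "eq q \<in> topspace (top_of_set (E q)) \<rightarrow> iso_bundle D \<sigma>"
      using DRGe[OF _ q] iso_bundle_mem unfolding eq_def by auto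
    show "continuous_map (top_of_set (E q)) (DRG_top D \<sigma>) (eq q)"
      unfolding DRG_top_def
    proof (rule continuous_on_generated_topo)
      fix Zb assume "Zb \<in> {Zset D \<sigma> U m n V | U m n V. open U \<and> open V}"
      then obtain U m n V where Z: "Zb = Zset D \<sigma> U m n V" "open U" "open V" by blast
      have pre: "eq q -` Zb \<inter> topspace (top_of_set (E q)) =
          (if int q = int m - int n \<and> l0 \<le> n then E q \<inter> (U \<inter> V) else {})"
      proof (rule set_eqI)
        fix x
        show "x \<in> eq q -` Zb \<inter> topspace (top_of_set (E q)) \<longleftrightarrow>
              x \<in> (if int q = int m - int n \<and> l0 \<le> n then E q \<inter> (U \<inter> V) else {})"
        proof (cases "x \<in> E q")
          case False then show ?thesis by auto
        next
          case True
          note ef = Efacts[OF True q]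
          have mem: "eq q x \<in> Zb \<longleftrightarrow> (int q = int m - int n \<and> x \<in> U \<and> x \<in> d m \<and> x \<in> V \<and> x \<in> d n \<and> s m x = s n x)"
            unfolding Z(1) eq_def by (rule Zset_mem)
          show ?thesis
          proof (cases "int q = int m - int n")
            case False then show ?thesis using mem by auto
          next
            case qmn: True
            then have m: "m = n + q" by linarith
            show ?thesis
            proof (cases "l0 \<le> n")
              case True
              have zd: "s l0 x \<in> d j" for j using pp_d ef by blast
              have dn: "x \<in> d n" using d_add[of x l0 "n - l0"] ef zd True by simp
              have dm: "x \<in> d m" using d_add[of x l0 "n - l0 + q"] ef zd True m by simp
              have "s m x = s (n - l0) (s q (s l0 x))" using True m by (simp add: s_comp ac_simps)
              also have "\<dots> = s n x" using ef True by (simp add: s_comp)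
              finally show ?thesis using mem qmn True dn dm by auto
            next
              case False
              have "\<not> (x \<in> d m \<and> s m x = s n x)"
              proof
                assume h: "x \<in> d m \<and> s m x = s n x"
                have q1: "q \<ge> 1" using q unfolding Q_def by simp
                have xn: "x \<in> d n" "s n x \<in> d q" using h m d_add by blast+
                have "s q (s n x) = s n x" using h m by (simp add: s_comp add.commute)
                then have "pp (s n x)" unfolding pp_def using xn q1 by (intro exI[of _ q]) simp
                then have "Lx x \<le> n" using Lx_le xn(1) by blast
                then show False using ef False by simp
              qed
              then show ?thesis using mem False by auto
            qed
          qed
        qed
      qed
      show "openin (top_of_set (E q)) (eq q -` Zb \<inter> topspace (top_of_set (E q)))"
        unfolding pre using Z(2,3) by (auto intro: openin_open_Int)
    next
      have "\<Union>{Zset D \<sigma> U m n V | U m n V. open U \<and> open V} = topspace (DRG_top D \<sigma>)"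
        unfolding DRG_top_def by simp
      also have "\<dots> = DRG D \<sigma>" by (rule top_DRG)
      finally show "eq q ` topspace (top_of_set (E q)) \<subseteq> \<Union>{Zset D \<sigma> U m n V | U m n V. open U \<and> open V}"
        using DRGe[OF _ q] by auto
    qed
  qed
  define Kc where "Kc q = eq q ` E q" for q
  have cK: "compactin T (Kc q)" if q: "q \<in> Q" for q
  proof -
    have "compactin (top_of_set (E q)) (E q)" using cE[OF q] by (simp add: compactin_subtopology)
    then show ?thesis unfolding Kc_def by (rule image_compactin[OF _ conte[OF q]])
  qed
  define Fs where "Fs q = {u \<in> circle. \<forall>j::nat. \<epsilon> \<le> dist (cis (2 * pi / real q) ^ j * u) w}" for q
  define Vq where "Vq q = circle - (\<lambda>u. u ^ q) ` Fs q" for q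
  have oVq: "openin (top_of_set circle) (Vq q)" for q
  proof -
    have cl: "closed (Fs q)"
    proof -
      have "Fs q = circle \<inter> (\<Inter>j. {u. \<epsilon> \<le> dist (cis (2 * pi / real q) ^ j * u) w})" unfolding Fs_def by auto
      moreover have "closed {u. \<epsilon> \<le> dist (cis (2 * pi / real q) ^ j * u) w}" for j :: nat
        by (intro closed_Collect_le continuous_intros)
      ultimately show ?thesis by (auto intro!: closed_Int closed_INT)
    qed
    have "Fs q \<subseteq> circle" unfolding Fs_def by blast
    then have "bounded (Fs q)" by (rule bounded_subset[OF bounded_sphere])
    then have "compact (Fs q)" using cl by (simp add: compact_eq_bounded_closed)
    then have "compact ((\<lambda>u. u ^ q) ` Fs q)" by (intro compact_continuous_image continuous_intros)
    then have "closed ((\<lambda>u. u ^ q) ` Fs q)" by (rule compact_imp_closed)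
    then have "open (- ((\<lambda>u. u ^ q) ` Fs q))" by (simp add: open_Compl)
    moreover have "Vq q = circle \<inter> - ((\<lambda>u. u ^ q) ` Fs q)" unfolding Vq_def by blast
    ultimately show ?thesis by (simp add: openin_open_Int)
  qed
  have wVq: "w ^ q \<in> Vq q" if q: "q \<in> Q" for q
  proof -
    have q0: "q > 0" using q unfolding Q_def by simp
    have "w ^ q \<notin> (\<lambda>u. u ^ q) ` Fs q"
    proof
      assume "w ^ q \<in> (\<lambda>u. u ^ q) ` Fs q"
      then obtain u where u: "u \<in> Fs q" "w ^ q = u ^ q" by blast
      have uc: "u \<in> circle" using u(1) unfolding Fs_def by blast
      obtain j where "w = cis (2 * pi / real q) ^ j * u" using root_rot[OF w(1) uc q0 u(2)] by blast
      then have "dist (cis (2 * pi / real q) ^ j * u) w = 0" by simp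
      moreover have "\<epsilon> \<le> dist (cis (2 * pi / real q) ^ j * u) w" using u(1) unfolding Fs_def by blast
      ultimately show False using e(1) by linarith
    qed
    moreover have "w ^ q \<in> circle" using w(1) by (simp add: norm_power)
    ultimately show ?thesis unfolding Vq_def by blast
  qed
  define Ui' where "Ui' = Ui \<inter> A \<inter> U2 \<inter> V0"
  have oUi': "open Ui'" unfolding Ui'_def using UW(1) AB(1) oU2 V0(1) by blast
  have x0Ui': "x0 \<in> Ui'" unfolding Ui'_def using UW(3) x0A x0U2 V0(2) by blast
  define Obs where "Obs = insert (Oset D \<sigma> Ui' {} circle) ((\<lambda>q. Oset D \<sigma> Ui' (Kc q) (Vq q)) ` Q)"
  have SBs: "Obs \<subseteq> SB"
  proof
    fix Ob assume "Ob \<in> Obs"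
    then consider "Ob = Oset D \<sigma> Ui' {} circle" | q where "q \<in> Q" "Ob = Oset D \<sigma> Ui' (Kc q) (Vq q)"
      unfolding Obs_def by blast
    then show "Ob \<in> SB"
    proof cases
      case 1
      have "compactin T {}" by simp
      then show ?thesis using 1 oUi' by force
    next
      case 2
      then show ?thesis using oUi' cK[OF 2(1)] oVq[of q] by blast
    qed
  qed
  have fO: "finite Obs" unfolding Obs_def using fQ by simp
  have nO: "Obs \<noteq> {}" unfolding Obs_def by simp
  have aO: "\<forall>Ob\<in>Obs. openin (Stab_top D \<sigma>) Ob" using SBs openSB by blast
  have oT: "openin (Stab_top D \<sigma>) (\<Inter>Obs)"
    by (rule openin_Inter[OF fO nO]) (use aO in blast)
  have pT: "qmap D \<sigma> x0 w \<in> \<Inter>Obs"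
  proof -
    have st: "qmap D \<sigma> x0 w \<in> Stab_dual D \<sigma>" by (rule qmap_Stab[OF w(1)])
    have "qmap D \<sigma> x0 w \<in> Oset D \<sigma> Ui' {} circle" unfolding Oset_mem qfst using st x0Ui' by simp
    moreover have "qmap D \<sigma> x0 w \<in> Oset D \<sigma> Ui' (Kc q) (Vq q)" if q: "q \<in> Q" for q
    proof -
      have "snd (qmap D \<sigma> x0 w) ` (Kc q \<inter> iso_at D \<sigma> x0) \<subseteq> Vq q"
      proof
        fix v assume "v \<in> snd (qmap D \<sigma> x0 w) ` (Kc q \<inter> iso_at D \<sigma> x0)"
        then obtain h where h: "h \<in> Kc q" "h \<in> iso_at D \<sigma> x0" "v = snd (qmap D \<sigma> x0 w) h" by blast
        obtain x where x: "x \<in> E q" "h = (x, int q, x)" using h(1) unfolding Kc_def eq_def by blast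
        have "x = x0" using h(2) x(2) iso_mem by blast
        then have "v = w ^ q" using h x by (simp add: qsnd)
        then show "v \<in> Vq q" using wVq[OF q] by simp
      qed
      then show ?thesis unfolding Oset_mem qfst using st x0Ui' by simp
    qed
    ultimately show ?thesis unfolding Obs_def by blast
  qed
  have disj: "\<Inter>Obs \<inter> {qmap D \<sigma> x z | x z. (x,z) \<in> Y} = {}"
  proof (rule ccontr)
    assume "\<Inter>Obs \<inter> {qmap D \<sigma> x z | x z. (x,z) \<in> Y} \<noteq> {}"
    then obtain x z where xz: "(x,z) \<in> Y" "qmap D \<sigma> x z \<in> \<Inter>Obs" by blast
    have "qmap D \<sigma> x z \<in> Oset D \<sigma> Ui' {} circle" using xz(2) unfolding Obs_def by blast
    then have xU: "x \<in> Ui'" unfolding Oset_mem qfst by blast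
    have zf: "z \<in> fiber Y x" using xz(1) fibY by blast
    then have fne: "fiber Y x \<noteq> {}" by blast
    have zc: "z \<in> circle" using zf unfolding fiber_def by blast
    have xA: "x \<in> A" using xU unfolding Ui'_def by blast
    note bx = bnd[OF xA fne]
    have perx: "periodic_pt D \<sigma> x" using bx by blast
    have PN: "P x \<le> N" using bx by blast
    have rotx: "(\<lambda>z. cis (2 * pi / real (P x)) * z) ` fiber Y x = fiber Y x" using bx by blast
    have P1: "P x \<ge> 1" using P_ex(1)[OF perx] .
    have "per_l D \<sigma> x = per_l D \<sigma> x0"
      using V0(3) xU fne unfolding Ui'_def by blast
    then have Lxx: "Lx x = l0" unfolding l0_def by (rule Lx_eq[OF perx per0])
    have cx: "x \<in> d l0" "pp (s l0 x)" using Lx_ex[OF perx] Lxx by auto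
    have cyx: "x \<in> d (P x + l0) \<and> s (P x + l0) x = s l0 x" by (rule P_cycle[OF perx cx])
    have dv: "P x0 dvd P x"
    proof (rule ccontr)
      assume "\<not> P x0 dvd P x"
      then have "P x \<in> Qbad" unfolding Qbad_def using P1 PN by blast
      moreover have "x \<in> U2" using xU unfolding Ui'_def by blast
      ultimately have "s (l0 + P x) x \<noteq> s l0 x" unfolding U2_def using Ub by blast
      then show False using cyx by (simp add: add.commute)
    qed
    define q where "q = P x"
    have qQ: "q \<in> Q" unfolding Q_def q_def using P1 PN dv by blast
    have xE: "x \<in> E q" unfolding E_def q_def using xU UW(4) cyx unfolding Ui'_def by (auto simp: add.commute)
    have hK: "(x, int q, x) \<in> Kc q" unfolding Kc_def eq_def using xE by blast
    have hI: "(x, int q, x) \<in> iso_at D \<sigma> x" using iso_mem DRGe[OF xE qQ] unfolding eq_def by blast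
    have "qmap D \<sigma> x z \<in> Oset D \<sigma> Ui' (Kc q) (Vq q)" using xz(2) qQ unfolding Obs_def by blast
    then have "snd (qmap D \<sigma> x z) (x, int q, x) \<in> Vq q" unfolding Oset_mem qfst using hK hI by blast
    then have "z ^ q \<in> Vq q" using hI by (simp add: qsnd)
    then have "z \<notin> Fs q" unfolding Vq_def by blast
    then have "\<not> (\<forall>j::nat. \<epsilon> \<le> dist (cis (2 * pi / real q) ^ j * z) w)" using zc unfolding Fs_def by blast
    then obtain j :: nat where "\<not> \<epsilon> \<le> dist (cis (2 * pi / real q) ^ j * z) w" by blast
    then have j: "dist (cis (2 * pi / real q) ^ j * z) w < \<epsilon>" by simp
    have "cis (2 * pi / real q) ^ j * z \<in> fiber Y x" using rot_iter[OF rotx zf] unfolding q_def by blast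
    moreover have "dist w (cis (2 * pi / real q) ^ j * z) \<le> \<epsilon>" using j by (simp add: dist_commute)
    ultimately show False using tube[OF xA] by blast
  qed
  show ?thesis using oT pT disj by blast
qed

lemma dir2: "\<exists>C. closedin (Stab_top D \<sigma>) C \<and> invariant D \<sigma> C \<and> Y = {(x, z) \<in> UNIV \<times> circle. qmap D \<sigma> x z \<in> C}"
proof -
  define C where "C = {qmap D \<sigma> x z | x z. (x,z) \<in> Y}"
  have Yc: "z \<in> circle" if "(x,z) \<in> Y" for x z
  proof -
    have "z \<in> fiber Y x" using fibY[of z x] that by simp
    then show ?thesis by (simp add: fiber_def)
  qed
  have Csub: "C \<subseteq> Stab_dual D \<sigma>"
  proof
    fix p assume "p \<in> C"
    then obtain x z where xz: "p = qmap D \<sigma> x z" "(x,z) \<in> Y" unfolding C_def by blast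
    show "p \<in> Stab_dual D \<sigma>" unfolding xz(1) by (rule qmap_Stab[OF Yc[OF xz(2)]])
  qed
  have opn: "openin (Stab_top D \<sigma>) (Stab_dual D \<sigma> - C)"
  proof (subst openin_subopen, intro ballI)
    fix p assume p: "p \<in> Stab_dual D \<sigma> - C"
    obtain x0 ch where pc1: "p = (x0, ch)" by (cases p) auto
    have pc2: "is_char D \<sigma> x0 ch" using p pc1 by (simp add: Stab_dual_def)
    note pc = pc1 pc2
    obtain w where w: "w \<in> circle" "ch = snd (qmap D \<sigma> x0 w)" using char_rep[OF pc(2)] by blast
    have pq: "p = qmap D \<sigma> x0 w" using pc(1) w(2) by (simp add: qmap_def)
    have wn: "w \<notin> fiber Y x0"
    proof
      assume "w \<in> fiber Y x0"
      then have "(x0, w) \<in> Y" using fibY by blast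
      then have "p \<in> C" unfolding C_def pq by blast
      then show False using p by blast
    qed
    have "\<exists>T. openin (Stab_top D \<sigma>) T \<and> p \<in> T \<and> T \<inter> C = {}"
    proof (cases "fiber Y x0 = {}")
      case True
      have "p \<in> Stab_dual D \<sigma>" "fst p = x0" using p pc by auto
      then show ?thesis using empty_nbhd[OF True] unfolding C_def by blast
    next
      case False
      have "fiber Y x0 \<noteq> circle" using wn w(1) by blast
      then show ?thesis using proper_nbhd[OF False _ w(1) wn] pq unfolding C_def by blast
    qed
    then obtain T0 where T0: "openin (Stab_top D \<sigma>) T0" "p \<in> T0" "T0 \<inter> C = {}" by blast
    have "T0 \<subseteq> Stab_dual D \<sigma>" using openin_subset[OF T0(1)] top_Stab by simp
    then show "\<exists>T. openin (Stab_top D \<sigma>) T \<and> p \<in> T \<and> T \<subseteq> Stab_dual D \<sigma> - C" using T0 by blast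
  qed
  have cl: "closedin (Stab_top D \<sigma>) C" unfolding closedin_def top_Stab using Csub opn by blast
  have inv: "invariant D \<sigma> C" unfolding invariant_def
  proof (intro ballI allI impI)
    fix g ch assume g: "g \<in> DRG D \<sigma>" and gc: "(gs g, ch) \<in> C"
    obtain a k b where gab: "g = (a,k,b)" by (cases g) auto
    have gb: "gs g = b" using gab by (simp add: gs_def)
    obtain x z where xz: "(b, ch) = qmap D \<sigma> x z" "(x,z) \<in> Y" using gc gb unfolding C_def by auto
    have xb: "x = b" using xz(1) qfst[of x z] by (metis fst_conv)
    have ch: "ch = snd (qmap D \<sigma> b z)" using xz(1) xb by (metis snd_conv)
    have "fiber Y a = fiber Y b" using fiber_orbit[OF Yii] g gab by blast
    then have "(a,z) \<in> Y" using xz(2) xb fibY by blast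
    moreover have "act D \<sigma> g (gs g, ch) = qmap D \<sigma> a z" using act_qmap g gab gb ch by simp
    ultimately show "act D \<sigma> g (gs g, ch) \<in> C" unfolding C_def by blast
  qed
  have Yeq: "Y = {(x, z) \<in> UNIV \<times> circle. qmap D \<sigma> x z \<in> C}"
  proof (rule set_eqI)
    fix xz :: "'a \<times> complex"
    obtain x z where xz: "xz = (x,z)" by (cases xz) auto
    have "(x,z) \<in> Y \<longleftrightarrow> z \<in> circle \<and> qmap D \<sigma> x z \<in> C"
    proof
      assume "(x,z) \<in> Y" then show "z \<in> circle \<and> qmap D \<sigma> x z \<in> C" using Yc unfolding C_def by blast
    next
      assume h: "z \<in> circle \<and> qmap D \<sigma> x z \<in> C"
      then obtain x' z' where e: "qmap D \<sigma> x z = qmap D \<sigma> x' z'" "(x',z') \<in> Y" unfolding C_def by blast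
      have "x' = x" using e(1) qfst by metis
      then have e2: "qmap D \<sigma> x z = qmap D \<sigma> x z'" "z' \<in> fiber Y x" using e fibY by auto
      have "z \<in> fiber Y x"
      proof (cases "fiber Y x = circle")
        case True then show ?thesis using h by simp
      next
        case False
        have ne: "fiber Y x \<noteq> {}" using e2 by blast
        have perx: "periodic_pt D \<sigma> x" by (rule propY(1)[OF ne False])
        have rotx: "(\<lambda>z. cis (2 * pi / real (P x)) * z) ` fiber Y x = fiber Y x" by (rule propY(2)[OF ne False])
        have "z ^ P x = z' ^ P x" using qmap_eq_iff[OF perx] e2(1) by blast
        moreover have "z' \<in> circle" using e2(2) unfolding fiber_def by blast
        moreover have "P x > 0" using P_ex(1)[OF perx] by simp
        ultimately obtain j where "z = cis (2 * pi / real (P x)) ^ j * z'" using root_rot h by blast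
        then show ?thesis using rot_iter[OF rotx e2(2)] by simp
      qed
      then show "(x,z) \<in> Y" using fibY by blast
    qed
    then show "xz \<in> Y \<longleftrightarrow> xz \<in> {(x, z) \<in> UNIV \<times> circle. qmap D \<sigma> x z \<in> C}" using xz by simp
  qed
  show ?thesis using cl inv Yeq by blast
qed
end
end

theorem theorem3p14:
  fixes \<sigma> :: "'a::t2_space \<Rightarrow> 'a" and D :: "'a set" and Y :: "('a \<times> complex) set"
  assumes "locally_compact_space (euclidean :: 'a topology)"
    and "open D" and "open (\<sigma> ` D)" and "local_homeo D \<sigma>"
    and "Y \<subseteq> UNIV \<times> circle"
  shows "(\<exists>C. closedin (Stab_top D \<sigma>) C \<and> invariant D \<sigma> C \<and>
              Y = {(x, z) \<in> UNIV \<times> circle. qmap D \<sigma> x z \<in> C})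
     \<longleftrightarrow> (closedin (top_of_set (UNIV \<times> circle)) Y \<and>
          (\<forall>x\<in>D. fiber Y x = fiber Y (\<sigma> x)) \<and>
          (\<forall>x0. fiber Y x0 \<noteq> {} \<and> fiber Y x0 \<noteq> circle \<longrightarrow>
              periodic_pt D \<sigma> x0 \<and>
              (\<lambda>z. cis (2 * pi / real (the_enat (per_p D \<sigma> x0))) * z) ` fiber Y x0 = fiber Y x0 \<and>
              (\<exists>V. open V \<and> x0 \<in> V \<and>
                 (\<forall>x\<in>V. per_l D \<sigma> x \<noteq> per_l D \<sigma> x0 \<longrightarrow> fiber Y x = {}))))"
proof -
  interpret DR D \<sigma> using assms(2,4) by unfold_locales
  show ?thesis
  proof
    assume "\<exists>C. closedin (Stab_top D \<sigma>) C \<and> invariant D \<sigma> C \<and>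
              Y = {(x, z) \<in> UNIV \<times> circle. qmap D \<sigma> x z \<in> C}"
    then obtain C where "closedin (Stab_top D \<sigma>) C" "invariant D \<sigma> C"
      "Y = {(x, z) \<in> UNIV \<times> circle. qmap D \<sigma> x z \<in> C}" by blast
    then show "closedin (top_of_set (UNIV \<times> circle)) Y \<and>
          (\<forall>x\<in>D. fiber Y x = fiber Y (\<sigma> x)) \<and>
          (\<forall>x0. fiber Y x0 \<noteq> {} \<and> fiber Y x0 \<noteq> circle \<longrightarrow>
              periodic_pt D \<sigma> x0 \<and>
              (\<lambda>z. cis (2 * pi / real (the_enat (per_p D \<sigma> x0))) * z) ` fiber Y x0 = fiber Y x0 \<and>
              (\<exists>V. open V \<and> x0 \<in> V \<and>
                 (\<forall>x\<in>V. per_l D \<sigma> x \<noteq> per_l D \<sigma> x0 \<longrightarrow> fiber Y x = {})))"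
      by (rule dir1)
  next
    assume R: "closedin (top_of_set (UNIV \<times> circle)) Y \<and>
          (\<forall>x\<in>D. fiber Y x = fiber Y (\<sigma> x)) \<and>
          (\<forall>x0. fiber Y x0 \<noteq> {} \<and> fiber Y x0 \<noteq> circle \<longrightarrow>
              periodic_pt D \<sigma> x0 \<and>
              (\<lambda>z. cis (2 * pi / real (the_enat (per_p D \<sigma> x0))) * z) ` fiber Y x0 = fiber Y x0 \<and>
              (\<exists>V. open V \<and> x0 \<in> V \<and>
                 (\<forall>x\<in>V. per_l D \<sigma> x \<noteq> per_l D \<sigma> x0 \<longrightarrow> fiber Y x = {})))"
    show "\<exists>C. closedin (Stab_top D \<sigma>) C \<and> invariant D \<sigma> C \<and>
              Y = {(x, z) \<in> UNIV \<times> circle. qmap D \<sigma> x z \<in> C}"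
      by (rule dir2[OF assms(1) assms(5) conjunct1[OF R] conjunct1[OF conjunct2[OF R]] conjunct2[OF conjunct2[OF R]]])
  qed
qed


end
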